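(* Let $(a,b,c)$ be a cyclic triple, assume (AW), that $(A^a,A^b)$ is a Leonard pair as in the context, and that $(A^b,A^c)$ is also a Leonard pair with eigenvalue orderings $\theta^b_0,\dots,\theta^b_{2s}$ and $\theta^c_0,\dots,\theta^c_{2s}$. Let $\{|\theta^b_M\rangle\}$ be the eigenbasis of $A^b$ attached to the pair $(A^a,A^b)$. Then for $0\le M\le 2s$, $$A^c|\theta^b_M\rangle=A^{(c,b)}_{M+1,M}\,\mathfrak g(M)\,|\theta^b_{M+1}\rangle+A^{(c,b)}_{M,M}|\theta^b_M\rangle+A^{(c,b)}_{M-1,M}\,\mathfrak g(M-1)^{-1}|\theta^b_{M-1}\rangle,$$ where $\mathfrak g(k)=q^{4k}\dfrac{\mathsf b^b}{\mathsf c^b}\cdot\dfrac{\mathsf c^bq^{-2k}+r_0q\,\mathsf c^a\mathsf b^c}{\mathsf b^bq^{2k}+r_0q^{-1}\mathsf c^a\mathsf b^c}$ (the last term is absent for $M=0$).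
   Context: $q\in\mathbb C^*$ is not a root of unity, $s\in\{0,\tfrac12,1,\dots\}$, $\mathcal V$ a complex vector space of dimension $2s+1$ with identity $\mathbb I$; $[X,Y]_q=qXY-q^{-1}YX$. Labels range over $\{\cdot,*,\diamond\}$; $A^{\cdot}=A$, $\mathsf b^\cdot=\mathsf b$, $\mathsf c^\cdot=\mathsf c$. Fix nonzero $r_0,\mathsf b^a,\mathsf c^a$ with $r_0^{-2}=\mathsf b\mathsf c=\mathsf b^*\mathsf c^*=\mathsf b^\diamond\mathsf c^\diamond$; $\theta^a_M=\mathsf b^aq^{2M}+\mathsf c^aq^{-2M}$; for distinct $a,b,c$, $\omega^{\{a,b,c\}}=-(q-q^{-1})^2(\theta^a_s\theta^b_s-r_0^{-1}(q^{2s+1}+q^{-2s-1})\theta^c_s)$. For $A,A^*\in\mathrm{End}(\mathcal V)$ set $A^\diamond=\frac{r_0}{q^2-q^{-2}}[A^*,A]_q+\frac{r_0\omega^{\{\cdot,*,\diamond\}}}{(q-q^{-1})(q^2-q^{-2})}\mathbb I$. Hypothesis (AW): for every ordered pair $(a,b)$ of distinct labels, $c$ the remaining one, $[A^a,[A^a,A^b]_q]_{q^{-1}}=-\frac{(q^2-q^{-2})^2}{r_0^2}A^b+\omega^{\{a,b,c\}}A^a+\frac{q+q^{-1}}{r_0}\omega^{\{a,c,b\}}\mathbb I$. A Leonard pair on $\mathcal V$ is a pair of diagonalizable operators such that each has an eigenbasis in which the other is represented by an irreducible tridiagonal matrix. A cyclic triple is one of $(\cdot,*,\diamond),( *,\diamond,\cdot),(\diamond,\cdot,*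 )$. Coefficients: for a cyclic triple $(a,b,c)$, $A^{(b,a)}_{M,M-1}=q^{2-4s}\frac{(1-q^{2M})(\mathsf c^a-\mathsf b^aq^{2M+4s})(\mathsf b^b\mathsf b^cr_0q^{4s-1}+\mathsf b^aq^{2M-2})(\mathsf c^a\mathsf c^cr_0q^{-1}+\mathsf c^bq^{2M-2})}{(\mathsf c^a-\mathsf b^aq^{4M-2})(\mathsf c^a-\mathsf b^aq^{4M})}$, $A^{(b,a)}_{M-1,M}=\frac{(1-q^{2M-4s-2})(\mathsf c^a-\mathsf b^aq^{2M-2})(\mathsf c^a+\mathsf b^b\mathsf b^cr_0q^{2M+4s-1})(\mathsf c^b+\mathsf b^a\mathsf c^cr_0q^{2M-1})}{(\mathsf c^a-\mathsf b^aq^{4M-4})(\mathsf c^a-\mathsf b^aq^{4M-2})}$, $A^{(b,a)}_{M,M}=\theta^b_0-A^{(b,a)}_{M,M+1}-A^{(b,a)}_{M,M-1}$; coefficients with indices outside $\{0,\dots,2s\}$ are $0$. $A^{(a,b)}_{M,N}$ is the image of $A^{(b,a)}_{M,N}$ under $\mathsf b^a\leftrightarrow\mathsf b^b$, $\mathsf c^a\leftrightarrow\mathsf c^b$, $\mathsf b^c\mapsto q^{-4s}\mathsf c^c$, $\mathsf c^c\mapsto q^{4s}\mathsf b^c$. This defines $A^{(x,y)}$ for all six ordered pairs of distinct labels (in particular $A^{(c,b)}$ is obtained from the cyclic triple $(b,c,a)$). Bases attached to a Leonard pair: for cyclic $(a,b,c)$ with $(A^a,A^b)$ a Leonard pair (eigenvalue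 orderings $\theta^a_M,\theta^b_M$), there are bases $\{|\theta^a_M\rangle\}$, $\{|\theta^b_M\rangle\}$ with $A^a|\theta^a_M\rangle=\theta^a_M|\theta^a_M\rangle$, $A^b|\theta^a_M\rangle=A^{(b,a)}_{M+1,M}|\theta^a_{M+1}\rangle+A^{(b,a)}_{M,M}|\theta^a_M\rangle+A^{(b,a)}_{M-1,M}|\theta^a_{M-1}\rangle$, $A^b|\theta^b_M\rangle=\theta^b_M|\theta^b_M\rangle$, $A^a|\theta^b_M\rangle=A^{(a,b)}_{M+1,M}|\theta^b_{M+1}\rangle+A^{(a,b)}_{M,M}|\theta^b_M\rangle+A^{(a,b)}_{M-1,M}|\theta^b_{M-1}\rangle$; these are the bases "attached to the pair $(A^a,A^b)$". *)

theory Defs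
  imports "HOL-Analysis.Analysis"
begin

text \<open>The three labels: Dot, Star, Dia stand for the plain label, star and diamond.
  The dimension of V is n+1 where n = 2s; vectors are complex^'n with CARD('n) = n+1,
  operators are complex^'n^'n matrices.\<close>

datatype label = Dot | Star | Dia

definition cyclic :: "label \<Rightarrow> label \<Rightarrow> label \<Rightarrow> bool" where
  "cyclic a b c \<longleftrightarrow> (a,b,c) \<in> {(Dot,Star,Dia),(Star,Dia,Dot),(Dia,Dot,Star)}"

definition smat :: "complex \<Rightarrow> complex^'n^'m \<Rightarrow> complex^'n^'m" where
  "smat c X = (\<chi> i j. c * X $ i $ j)"

definition qbr :: "complex \<Rightarrow> complex^'n^'n \<Rightarrow> complex^'n^'n \<Rightarrow> complex^'n^'n" where
  "qbr q X Y = smat q (X ** Y) - smat (inverse q) (Y ** X)"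

definition theta :: "complex \<Rightarrow> (label \<Rightarrow> complex) \<Rightarrow> (label \<Rightarrow> complex) \<Rightarrow> label \<Rightarrow> int \<Rightarrow> complex" where
  "theta q bb cc x m = bb x * q powi (2*m) + cc x * q powi (-2*m)"

text \<open>theta^x_s with s = n/2\<close>
definition thetaS :: "complex \<Rightarrow> nat \<Rightarrow> (label \<Rightarrow> complex) \<Rightarrow> (label \<Rightarrow> complex) \<Rightarrow> label \<Rightarrow> complex" where
  "thetaS q n bb cc x = bb x * q powi (int n) + cc x * q powi (- int n)"

definition omega :: "complex \<Rightarrow> nat \<Rightarrow> complex \<Rightarrow> (label \<Rightarrow> complex) \<Rightarrow> (label \<Rightarrow> complex)
    \<Rightarrow> label \<Rightarrow> label \<Rightarrow> label \<Rightarrow> complex" where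
  "omega q n r0 bb cc x y z =
     - ((q - inverse q)^2) * (thetaS q n bb cc x * thetaS q n bb cc y
        - inverse r0 * (q powi (int n + 1) + q powi (- int n - 1)) * thetaS q n bb cc z)"

definition is_basis :: "nat \<Rightarrow> (int \<Rightarrow> complex^'n) \<Rightarrow> bool" where
  "is_basis n v \<longleftrightarrow>
     (\<forall>c. (\<Sum>M\<in>{0..int n}. c M *s v M) = 0 \<longrightarrow> (\<forall>M\<in>{0..int n}. c M = 0)) \<and>
     (\<forall>w. \<exists>c. w = (\<Sum>M\<in>{0..int n}. c M *s v M))"

definition irr_tridiag_in :: "nat \<Rightarrow> complex^'n^'n \<Rightarrow> (int \<Rightarrow> complex^'n) \<Rightarrow> bool" where
  "irr_tridiag_in n B v \<longleftrightarrow>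
     (\<exists>x :: int \<Rightarrow> int \<Rightarrow> complex.
        (\<forall>M\<in>{0..int n}. B *v v M = (\<Sum>N\<in>{0..int n}. x N M *s v N)) \<and>
        (\<forall>M\<in>{0..int n}. \<forall>N\<in>{0..int n}. \<bar>N - M\<bar> > 1 \<longrightarrow> x N M = 0) \<and>
        (\<forall>M\<in>{0..int n}. \<forall>N\<in>{0..int n}. \<bar>N - M\<bar> = 1 \<longrightarrow> x N M \<noteq> 0))"

definition eigenbasis_ord :: "nat \<Rightarrow> complex^'n^'n \<Rightarrow> (int \<Rightarrow> complex) \<Rightarrow> (int \<Rightarrow> complex^'n) \<Rightarrow> bool" where
  "eigenbasis_ord n A th v \<longleftrightarrow> is_basis n v \<and> (\<forall>M\<in>{0..int n}. A *v v M = th M *s v M)"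

definition leonard_pair_ord :: "nat \<Rightarrow> complex^'n^'n \<Rightarrow> complex^'n^'n
    \<Rightarrow> (int \<Rightarrow> complex) \<Rightarrow> (int \<Rightarrow> complex) \<Rightarrow> bool" where
  "leonard_pair_ord n A B th ph \<longleftrightarrow>
     (\<exists>u. eigenbasis_ord n A th u \<and> irr_tridiag_in n B u) \<and>
     (\<exists>w. eigenbasis_ord n B ph w \<and> irr_tridiag_in n A w)"

text \<open>A^{(b,a)}_{M,M-1} in terms of Ba=b^a, Ca=c^a, Bb, Cb, Bc, Cc; 4s = 2n\<close>
definition cL :: "complex \<Rightarrow> nat \<Rightarrow> complex \<Rightarrow> complex \<Rightarrow> complex \<Rightarrow> complex \<Rightarrow> complex
    \<Rightarrow> complex \<Rightarrow> complex \<Rightarrow> int \<Rightarrow> complex" where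
  "cL q n r0 Ba Ca Bb Cb Bc Cc M =
     q powi (2 - 2 * int n) * (1 - q powi (2*M)) * (Ca - Ba * q powi (2*M + 2 * int n))
     * (Bb * Bc * r0 * q powi (2 * int n - 1) + Ba * q powi (2*M - 2))
     * (Ca * Cc * r0 * q powi (-1) + Cb * q powi (2*M - 2))
     / ((Ca - Ba * q powi (4*M - 2)) * (Ca - Ba * q powi (4*M)))"

definition cU :: "complex \<Rightarrow> nat \<Rightarrow> complex \<Rightarrow> complex \<Rightarrow> complex \<Rightarrow> complex \<Rightarrow> complex
    \<Rightarrow> complex \<Rightarrow> complex \<Rightarrow> int \<Rightarrow> complex" where
  "cU q n r0 Ba Ca Bb Cb Bc Cc M =
     (1 - q powi (2*M - 2 * int n - 2)) * (Ca - Ba * q powi (2*M - 2))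
     * (Ca + Bb * Bc * r0 * q powi (2*M + 2 * int n - 1))
     * (Cb + Ba * Cc * r0 * q powi (2*M - 1))
     / ((Ca - Ba * q powi (4*M - 4)) * (Ca - Ba * q powi (4*M - 2)))"

definition cE :: "complex \<Rightarrow> nat \<Rightarrow> complex \<Rightarrow> complex \<Rightarrow> complex \<Rightarrow> complex \<Rightarrow> complex
    \<Rightarrow> complex \<Rightarrow> complex \<Rightarrow> int \<Rightarrow> int \<Rightarrow> complex" where
  "cE q n r0 Ba Ca Bb Cb Bc Cc i j =
     (if i \<notin> {0..int n} \<or> j \<notin> {0..int n} then 0
      else if i = j + 1 then cL q n r0 Ba Ca Bb Cb Bc Cc i
      else if j = i + 1 then cU q n r0 Ba Ca Bb Cb Bc Cc j
      else if i = j then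
        Bb + Cb
        - (if i + 1 \<le> int n then cU q n r0 Ba Ca Bb Cb Bc Cc (i + 1) else 0)
        - (if i - 1 \<ge> 0 then cL q n r0 Ba Ca Bb Cb Bc Cc i else 0)
      else 0)"

text \<open>For a cyclic triple (x,y,z): coef_yx gives A^{(y,x)}, coef_xy gives A^{(x,y)}.\<close>
definition coef_yx :: "complex \<Rightarrow> nat \<Rightarrow> complex \<Rightarrow> (label \<Rightarrow> complex) \<Rightarrow> (label \<Rightarrow> complex)
    \<Rightarrow> label \<Rightarrow> label \<Rightarrow> label \<Rightarrow> int \<Rightarrow> int \<Rightarrow> complex" where
  "coef_yx q n r0 bb cc x y z = cE q n r0 (bb x) (cc x) (bb y) (cc y) (bb z) (cc z)"

definition coef_xy :: "complex \<Rightarrow> nat \<Rightarrow> complex \<Rightarrow> (label \<Rightarrow> complex) \<Rightarrow> (label \<Rightarrow> complex)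
    \<Rightarrow> label \<Rightarrow> label \<Rightarrow> label \<Rightarrow> int \<Rightarrow> int \<Rightarrow> complex" where
  "coef_xy q n r0 bb cc x y z =
     cE q n r0 (bb y) (cc y) (bb x) (cc x) (q powi (- 2 * int n) * cc z) (q powi (2 * int n) * bb z)"

definition attached_bases :: "complex \<Rightarrow> nat \<Rightarrow> complex \<Rightarrow> (label \<Rightarrow> complex) \<Rightarrow> (label \<Rightarrow> complex)
    \<Rightarrow> (label \<Rightarrow> complex^'n^'n) \<Rightarrow> label \<Rightarrow> label \<Rightarrow> label
    \<Rightarrow> (int \<Rightarrow> complex^'n) \<Rightarrow> (int \<Rightarrow> complex^'n) \<Rightarrow> bool" where
  "attached_bases q n r0 bb cc A x y z va vb \<longleftrightarrow>
     is_basis n va \<and> is_basis n vb \<and>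
     (\<forall>M\<in>{0..int n}.
        A x *v va M = theta q bb cc x M *s va M \<and>
        A y *v va M = coef_yx q n r0 bb cc x y z (M+1) M *s va (M+1)
                    + coef_yx q n r0 bb cc x y z M M *s va M
                    + coef_yx q n r0 bb cc x y z (M-1) M *s va (M-1) \<and>
        A y *v vb M = theta q bb cc y M *s vb M \<and>
        A x *v vb M = coef_xy q n r0 bb cc x y z (M+1) M *s vb (M+1)
                    + coef_xy q n r0 bb cc x y z M M *s vb M
                    + coef_xy q n r0 bb cc x y z (M-1) M *s vb (M-1))"

definition gfun :: "complex \<Rightarrow> complex \<Rightarrow> (label \<Rightarrow> complex) \<Rightarrow> (label \<Rightarrow> complex)
    \<Rightarrow> label \<Rightarrow> label \<Rightarrow> label \<Rightarrow> int \<Rightarrow> complex" where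
  "gfun q r0 bb cc a b c k =
     q powi (4*k) * (bb b / cc b)
     * (cc b * q powi (-2*k) + r0 * q * cc a * bb c)
     / (bb b * q powi (2*k) + r0 * q powi (-1) * cc a * bb c)"

end

theory Submission
  imports Defs
begin

lemma mv_add: "(X::complex^'n^'m) *v (a + b) = X *v a + X *v b"
  by (simp add: vec_eq_iff matrix_vector_mult_def sum.distrib algebra_simps)
lemma mv_diff: "(X::complex^'n^'m) *v (a - b) = X *v a - X *v b"
  by (simp add: vec_eq_iff matrix_vector_mult_def sum_subtractf algebra_simps)
lemma mv_smult: "(X::complex^'n^'m) *v (c *s a) = c *s (X *v a)"
  by (simp add: vec_eq_iff matrix_vector_mult_def sum_distrib_left algebra_simps)
lemma mv_sum: "(X::complex^'n^'m) *v (\<Sum>i\<in>S. f i) = (\<Sum>i\<in>S. X *v f i)"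
  by (induction S rule: infinite_finite_induct) (simp_all add: mv_add)
lemma smat_mv: "smat c (X::complex^'n^'m) *v v = c *s (X *v v)"
  by (simp add: vec_eq_iff matrix_vector_mult_def smat_def sum_distrib_left algebra_simps)
lemma madd_mv: "((X::complex^'n^'m) + Y) *v v = X *v v + Y *v v"
  by (simp add: vec_eq_iff matrix_vector_mult_def sum.distrib algebra_simps)
lemma mdiff_mv: "((X::complex^'n^'m) - Y) *v v = X *v v - Y *v v"
  by (simp add: vec_eq_iff matrix_vector_mult_def sum_subtractf algebra_simps)
lemma qbr_mv: "qbr q (X::complex^'n^'n) Y *v v = q *s (X *v (Y *v v)) - inverse q *s (Y *v (X *v v))"
  unfolding qbr_def by (simp add: mdiff_mv smat_mv matrix_vector_mul_assoc)
lemma mat_mv: "mat c *v (v::complex^'n) = c *s v"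
proof -
  have "(\<Sum>j\<in>UNIV. (if i = j then c else 0) * v $ j) = c * v $ i" for i
    by (simp add: if_distrib[of "\<lambda>x. x * _"] cong: if_cong)
  thus ?thesis by (simp add: vec_eq_iff matrix_vector_mult_def mat_def)
qed


lemma pnum: "(q::complex) powi (numeral k * M) = (q powi M) ^ numeral k"
  by (metis mult.commute power_int_mult power_int_of_nat of_nat_numeral)
lemma pnegnum: "(q::complex) \<noteq> 0 \<Longrightarrow> q powi (- numeral k * M) = inverse ((q powi M) ^ numeral k)"
  by (metis mult_minus_left pnum power_int_minus)
lemma padd: "(q::complex) \<noteq> 0 \<Longrightarrow> q powi (a + b) = q powi a * q powi b"
  by (simp add: power_int_add)
lemma pdiff: "(q::complex) \<noteq> 0 \<Longrightarrow> q powi (a - b) = q powi a / q powi b"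
  by (simp add: power_int_diff)
lemmas pw = distrib_left right_diff_distrib padd pdiff pnum pnegnum mult_1_right power_int_minus power_int_of_nat power_int_1_right power_int_numeral not_False_eq_True

lemma pweqs:
  fixes q :: complex and M :: int and n :: nat
  assumes q: "q \<noteq> 0"
  assumes x_def: "x = q powi (2*M)" and s_def: "s = q ^ n"
  shows "q powi (2*(M+1)) = x*q^2" "q powi (-2*(M+1)) = inverse (x*q^2)" "q powi (-2*M) = inverse x"
    "q powi (- 2 * int n) = inverse (s^2)" "q powi (2 * int n - 1) = s^2/q" "q powi (2*(M+1)-2) = x" "q powi (2 * int n) = s^2"
    "q powi (- 1) = inverse q" "q powi (4*M) = x^2" "q powi (2 - 2 * int n) = q^2/s^2" "q powi (2*(M+1) + 2*int n) = x*q^2* s^2"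
    "q powi (4*(M+1)-2) = x^2*q^2" "q powi (4*(M+1)) = x^2*q^4"
    "q powi (2*(M+1) - 2*int n - 2) = x/s^2" "q powi (2*(M+1)+2*int n-1) = x* s^2*q" "q powi (2*(M+1)-1) = x*q"
    "q powi (4*(M+1)-4) = x^2" "q powi (2*M + 2*int n) = x* s^2" "q powi (2*M-2) = x/q^2"
    "q powi (4*M-2) = x^2/q^2" "q powi (int n) = s" "q powi (- int n) = inverse s" "q powi (int n + 1) = s*q" "q powi (- int n - 1) = inverse (s*q)"
    "q powi (2*M - 2*int n - 2) = x/(s^2*q^2)" "q powi (2*M + 2*int n - 1) = x* s^2/q" "q powi (2*M-1) = x/q" "q powi (4*M-4) = x^2/q^4"
    "q powi (2*(M-1)) = x/q^2" "q powi (-2*(M-1)) = q^2/x" "q powi (4*(M-1)) = x^2/q^4"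
  unfolding x_def s_def using q by (simp_all only: pw q) (simp_all add: q field_simps power_mult_distrib power2_eq_square power4_eq_xxxx flip: power_mult)

lemma gen3: "K*f3*f4 = f3'*f4'*g \<Longrightarrow> K * (p*a*b*f3*f4/D) = (p*a*b*f3'*f4'/D)*(g::complex)"
proof -
  assume h: "K*f3*f4 = f3'*f4'*g"
  have "K * (p*a*b*f3*f4/D) = (p*a*b/D) * (K*f3*f4)" by (simp add: field_simps)
  also have "\<dots> = (p*a*b/D) * (f3'*f4'*g)" by (simp only: h)
  also have "\<dots> = (p*a*b*f3'*f4'/D)*g" by (simp add: field_simps)
  finally show ?thesis .
qed

lemma gen2d: "K*f3*f4 = f3'*f4'/g \<Longrightarrow> K * (a*b*f3*f4/D) = (a*b*f3'*f4'/D)/(g::complex)"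
proof -
  assume h: "K*f3*f4 = f3'*f4'/g"
  have "K * (a*b*f3*f4/D) = (a*b/D) * (K*f3*f4)" by (simp add: field_simps)
  also have "\<dots> = (a*b/D) * (f3'*f4'/g)" by (simp only: h)
  also have "\<dots> = (a*b*f3'*f4'/D)/g" by (simp add: field_simps)
  finally show ?thesis .
qed


lemma coreU:
  fixes q x y r0 B C al ga be de :: complex
  assumes q: "q \<noteq> 0" and q2: "q^2 - inverse q^2 \<noteq> 0" and x: "x \<noteq> 0" and y: "y \<noteq> 0" and r0: "r0 \<noteq> 0" and B: "B \<noteq> 0" and al: "al \<noteq> 0" and be: "be \<noteq> 0"
    and C: "C = inverse (r0^2 * B)" and ga: "ga = inverse (r0^2*al)" and de: "de = inverse (r0^2*be)"
    and gd: "B * x + r0 * inverse q * ga * be \<noteq> 0"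
  shows "r0 / (q^2 - inverse q^2) * (q * (B * (x*q^2) + C * inverse (x*q^2)) - inverse q * (B * x + C * inverse x))
      * (al*(inverse y * de)*r0*(y/q) + B*x)
      * (C*(y * be)*r0*inverse q + ga*x)
    = (be*al*r0*(y/q) + B*x) * (C*ga*r0*inverse q + de*x) *
      (x^2 * (B / C) * (C * inverse x + r0*q*ga*be) / (B * x + r0 * inverse q * ga * be))"
proof -
  have K: "r0 / (q^2 - inverse q^2) * (q * (B * (x*q^2) + C * inverse (x*q^2)) - inverse q * (B * x + C * inverse x)) = r0*B*q*x"
  proof -
    have "q * (B * (x*q^2) + C * inverse (x*q^2)) - inverse q * (B * x + C * inverse x) = (q^2 - inverse q^2) * (B*q*x)"
      using q x by (simp add: field_simps power2_eq_square)
    thus ?thesis using q2 by simp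
  qed
  have main: "r0*B*q*x * (al*(inverse y * de)*r0*(y/q) + B*x) * (C*(y * be)*r0*inverse q + ga*x) * (B * x + r0 * inverse q * ga * be)
     = (be*al*r0*(y/q) + B*x) * (C*ga*r0*inverse q + de*x) * (x^2 * (B / C) * (C * inverse x + r0*q*ga*be))"
    using q x y r0 B al be unfolding C ga de
    by (simp add: field_simps) algebra
  have L: "r0*B*q*x * (al*(inverse y * de)*r0*(y/q) + B*x) * (C*(y * be)*r0*inverse q + ga*x)
     = (be*al*r0*(y/q) + B*x) * (C*ga*r0*inverse q + de*x) * (x^2 * (B / C) * (C * inverse x + r0*q*ga*be)) / (B * x + r0 * inverse q * ga * be)"
    by (subst nonzero_eq_divide_eq[OF gd]) (rule main)
  show ?thesis unfolding K using L by (simp only: times_divide_eq_right)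
qed

lemma coreD:
  fixes q x s r0 B C al ga be de :: complex
  assumes q: "q \<noteq> 0" and q2: "q^2 - inverse q^2 \<noteq> 0" and x: "x \<noteq> 0" and s: "s \<noteq> 0" and r0: "r0 \<noteq> 0" and B: "B \<noteq> 0" and al: "al \<noteq> 0" and be: "be \<noteq> 0"
    and C: "C = inverse (r0^2 * B)" and ga: "ga = inverse (r0^2*al)" and de: "de = inverse (r0^2*be)"
    and gn: "C * (q^2/x) + r0*q*ga*be \<noteq> 0" and gd: "B * (x/q^2) + r0 * inverse q * ga * be \<noteq> 0"
  shows "r0 / (q^2 - inverse q^2) * (q * (B * (x/q^2) + C * (q^2/x)) - inverse q * (B * x + C * inverse x))
      * (C + al*(inverse (s^2) * de)*r0*(x* s^2/q))
      * (ga + B*(s^2 * be)*r0*(x/q))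
    = (C + be*al*r0*(x* s^2/q)) * (de + B*ga*r0*(x/q)) /
      (x^2/q^4 * (B / C) * (C * (q^2/x) + r0*q*ga*be) / (B * (x/q^2) + r0 * inverse q * ga * be))"
proof -
  have K: "r0 / (q^2 - inverse q^2) * (q * (B * (x/q^2) + C * (q^2/x)) - inverse q * (B * x + C * inverse x)) = r0*C*q/x"
  proof -
    have "q * (B * (x/q^2) + C * (q^2/x)) - inverse q * (B * x + C * inverse x) = (q^2 - inverse q^2) * (C*q/x)"
      using q x by (simp add: field_simps power2_eq_square)
    thus ?thesis using q2 by simp
  qed
  have Cn: "C \<noteq> 0" using C r0 B by simp
  have P: "x^2/q^4 * (B / C) * (C * (q^2/x) + r0*q*ga*be) \<noteq> 0" using q x B Cn gn by simp
  have main: "r0*C*q/x * (C + al*(inverse (s^2) * de)*r0*(x* s^2/q)) * (ga + B*(s^2 * be)*r0*(x/q)) * (x^2/q^4 * (B / C) * (C * (q^2/x) + r0*q*ga*be))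
     = (C + be*al*r0*(x* s^2/q)) * (de + B*ga*r0*(x/q)) * (B * (x/q^2) + r0 * inverse q * ga * be)"
    using q x s r0 B al be unfolding C ga de
    by (simp add: field_simps) algebra
  have "r0*C*q/x * (C + al*(inverse (s^2) * de)*r0*(x* s^2/q)) * (ga + B*(s^2 * be)*r0*(x/q))
     = (C + be*al*r0*(x* s^2/q)) * (de + B*ga*r0*(x/q)) * (B * (x/q^2) + r0 * inverse q * ga * be) / (x^2/q^4 * (B / C) * (C * (q^2/x) + r0*q*ga*be))"
    by (subst nonzero_eq_divide_eq[OF P]) (rule main)
  thus ?thesis unfolding K by (simp only: divide_divide_eq_right times_divide_eq_left)
qed


lemma coreGU:
  fixes q x s r0 B C al ga be de :: complex
  assumes q: "q \<noteq> 0" and qq: "q^2 + 1 \<noteq> 0" and q1: "q - inverse q \<noteq> 0" and x: "x \<noteq> 0" and s: "s \<noteq> 0" and r0: "r0 \<noteq> 0" and B: "B \<noteq> 0" and al: "al \<noteq> 0" and be: "be \<noteq> 0"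
    and C: "C = inverse (r0^2 * B)" and ga: "ga = inverse (r0^2*al)" and de: "de = inverse (r0^2*be)"
  shows "r0 / (q^2 - inverse q^2) * (q * (B * x + C * inverse x) - inverse q * (B * x + C * inverse x))
      * ((C + al*(inverse (s^2) * de)*r0*(x* s^2*q)) * (ga + B*(s^2 * be)*r0*(x*q)))
      - (C + be*al*r0*(x* s^2*q)) * (de + B*ga*r0*(x*q))
    = (C - B*(x^2*q^2)) * (- 1/(r0^2*be) + q/(x*r0^3*B*al) - q*x* s^2*r0*B*al + q^2* s^2*be) / (q^2+1)"
proof -
  have K: "r0 / (q^2 - inverse q^2) * (q * (B * x + C * inverse x) - inverse q * (B * x + C * inverse x)) = r0*(B*x + C*inverse x)*q/(q^2+1)"
  proof -
    let ?T = "B * x + C * inverse x"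
    have a: "q * ?T - inverse q * ?T = (q - inverse q) * ?T" by (simp add: algebra_simps)
    have b: "q^2 - inverse q^2 = (q - inverse q) * (q + inverse q)" by (simp add: algebra_simps power2_eq_square)
    have c: "q + inverse q = (q^2+1)/q" using q by (simp add: field_simps power2_eq_square)
    have "r0 / (q^2 - inverse q^2) * (q * ?T - inverse q * ?T) = r0 * ?T / (q + inverse q)"
      unfolding a b using q1 by simp
    also have "\<dots> = r0 * ?T * q / (q^2+1)" unfolding c using q qq by simp
    finally show ?thesis .
  qed
  have main: "r0*(B*x + C*inverse x)*q * ((C + al*(inverse (s^2) * de)*r0*(x* s^2*q)) * (ga + B*(s^2 * be)*r0*(x*q)))
      - (q^2+1) * ((C + be*al*r0*(x* s^2*q)) * (de + B*ga*r0*(x*q)))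
    = (C - B*(x^2*q^2)) * (- 1/(r0^2*be) + q/(x*r0^3*B*al) - q*x* s^2*r0*B*al + q^2* s^2*be)"
    using q x s r0 B al be unfolding C ga de
    by (simp add: field_simps) algebra
  show ?thesis unfolding K using main qq by (simp add: field_simps)
qed

lemma Ksimp:
  fixes q r0 T :: complex
  assumes q: "q \<noteq> 0" and qq: "q^2 + 1 \<noteq> 0" and q1: "q - inverse q \<noteq> 0"
  shows "r0 / (q^2 - inverse q^2) * (q * T - inverse q * T) = r0 * T * q / (q^2+1)"
proof -
    have a: "q * T - inverse q * T = (q - inverse q) * T" by (simp add: algebra_simps)
    have b: "q^2 - inverse q^2 = (q - inverse q) * (q + inverse q)" by (simp add: algebra_simps power2_eq_square)
    have c: "q + inverse q = (q^2+1)/q" using q by (simp add: field_simps power2_eq_square)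
    have "r0 / (q^2 - inverse q^2) * (q * T - inverse q * T) = r0 * T / (q + inverse q)"
      unfolding a b using q1 by simp
    also have "\<dots> = r0 * T * q / (q^2+1)" unfolding c using q qq by simp
    finally show ?thesis .
qed

lemma dsimp:
  fixes q r0 W :: complex
  assumes q: "q \<noteq> 0" and qq: "q^2 + 1 \<noteq> 0" and q1: "q - inverse q \<noteq> 0"
  shows "r0 * (- ((q - inverse q)^2) * W) / ((q - inverse q) * (q^2 - inverse q^2)) = - (r0 * W * q / (q^2+1))"
proof -
    have b: "q^2 - inverse q^2 = (q - inverse q) * (q + inverse q)" by (simp add: algebra_simps power2_eq_square)
    have c: "q + inverse q = (q^2+1)/q" using q by (simp add: field_simps power2_eq_square)
    have "r0 * (- ((q - inverse q)^2) * W) / ((q - inverse q) * (q^2 - inverse q^2)) = - (r0 * W / (q + inverse q))"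
      unfolding b using q1 by (simp add: power2_eq_square)
    also have "\<dots> = - (r0 * W * q / (q^2+1))" unfolding c using q qq by simp
    finally show ?thesis .
qed

lemma comb1: "(p::complex) \<noteq> 0 \<Longrightarrow> (a/p*u + -(b/p) - c)*D = ((a*u - b - p*c)*D)/p"
  by (simp add: field_simps)
lemma comb2: "(p::complex) \<noteq> 0 \<Longrightarrow> a/p*F - G = (a*F - p*G)/p"
  by (simp add: field_simps)
lemma comb3: "(p::complex) \<noteq> 0 \<Longrightarrow> a/p*u + -(b/p) = (a*u - b)/p"
  by (simp add: field_simps)

lemma coreGL:
  fixes q x s r0 B C al ga be de :: complex
  assumes q: "q \<noteq> 0" and qq: "q^2 + 1 \<noteq> 0" and q1: "q - inverse q \<noteq> 0" and x: "x \<noteq> 0" and s: "s \<noteq> 0" and r0: "r0 \<noteq> 0" and B: "B \<noteq> 0" and al: "al \<noteq> 0" and be: "be \<noteq> 0"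
    and C: "C = inverse (r0^2 * B)" and ga: "ga = inverse (r0^2*al)" and de: "de = inverse (r0^2*be)"
  shows "r0 / (q^2 - inverse q^2) * (q * (B * x + C * inverse x) - inverse q * (B * x + C * inverse x))
      * ((al*(inverse (s^2) * de)*r0*(s^2/q) + B*(x/q^2)) * (C*(s^2*be)*r0*inverse q + ga*(x/q^2)))
      - (be*al*r0*(s^2/q) + B*(x/q^2)) * (C*ga*r0*inverse q + de*(x/q^2))
    = (C - B*(x^2/q^2)) * (1/(q^2*r0^2*be) + s^2*al/(q*x*r0*B) - x*B/(q*r0*al) - s^2*be) / (q^2+1)"
proof -
  have main: "r0*(B*x + C*inverse x)*q * ((al*(inverse (s^2) * de)*r0*(s^2/q) + B*(x/q^2)) * (C*(s^2*be)*r0*inverse q + ga*(x/q^2)))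
      - (q^2+1) * ((be*al*r0*(s^2/q) + B*(x/q^2)) * (C*ga*r0*inverse q + de*(x/q^2)))
    = (C - B*(x^2/q^2)) * (1/(q^2*r0^2*be) + s^2*al/(q*x*r0*B) - x*B/(q*r0*al) - s^2*be)"
    using q x s r0 B al be unfolding C ga de
    by (simp add: field_simps) algebra
  show ?thesis unfolding Ksimp[OF q qq q1] comb2[OF qq] main ..
qed

lemma coreMain:
  fixes q x s r0 B C al ga be de :: complex
  assumes q: "q \<noteq> 0" and qq: "q^2 + 1 \<noteq> 0" and q1: "q - inverse q \<noteq> 0" and x: "x \<noteq> 0" and s: "s \<noteq> 0" and r0: "r0 \<noteq> 0" and B: "B \<noteq> 0" and al: "al \<noteq> 0" and be: "be \<noteq> 0"
    and C: "C = inverse (r0^2 * B)" and ga: "ga = inverse (r0^2*al)" and de: "de = inverse (r0^2*be)"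
  shows "(r0 / (q^2 - inverse q^2) * (q * (B * x + C * inverse x) - inverse q * (B * x + C * inverse x)) * (al + ga)
       + r0 * (- ((q - inverse q)^2) * ((al* s + ga*inverse s)*(B* s + C*inverse s) - inverse r0*(s*q + inverse (s*q))*(be* s + de*inverse s))) / ((q - inverse q) * (q^2 - inverse q^2))
       - (be + de)) * (C - B*x^2)
    = ((1 - x/s^2)*(C - B*x)*(- 1/(r0^2*be) + q/(x*r0^3*B*al) - q*x* s^2*r0*B*al + q^2* s^2*be)
       + q^2/s^2*(1-x)*(C - B*(x* s^2))*(1/(q^2*r0^2*be) + s^2*al/(q*x*r0*B) - x*B/(q*r0*al) - s^2*be)) / (q^2+1)"
proof -
  have main: "(r0*(B*x + C*inverse x)*q * (al + ga)
       - r0 * ((al* s + ga*inverse s)*(B* s + C*inverse s) - inverse r0*(s*q + inverse (s*q))*(be* s + de*inverse s)) * q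
       - (q^2+1) * (be + de)) * (C - B*x^2)
    = ((1 - x/s^2)*(C - B*x)*(- 1/(r0^2*be) + q/(x*r0^3*B*al) - q*x* s^2*r0*B*al + q^2* s^2*be)
       + q^2/s^2*(1-x)*(C - B*(x* s^2))*(1/(q^2*r0^2*be) + s^2*al/(q*x*r0*B) - x*B/(q*r0*al) - s^2*be))"
    using q x s r0 B al be unfolding C ga de
    by (simp add: field_simps) algebra
  show ?thesis unfolding Ksimp[OF q qq q1] dsimp[OF q qq q1] comb1[OF qq] main ..
qed

lemma coreMain0:
  fixes q r0 B C al ga be de :: complex
  assumes q: "q \<noteq> 0" and qq: "q^2 + 1 \<noteq> 0" and q1: "q - inverse q \<noteq> 0" and r0: "r0 \<noteq> 0" and B: "B \<noteq> 0" and al: "al \<noteq> 0" and be: "be \<noteq> 0"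
    and C: "C = inverse (r0^2 * B)" and ga: "ga = inverse (r0^2*al)" and de: "de = inverse (r0^2*be)"
  shows "r0 / (q^2 - inverse q^2) * (q * (B * 1 + C * inverse 1) - inverse q * (B * 1 + C * inverse 1)) * (al + ga)
       + r0 * (- ((q - inverse q)^2) * ((al*1 + ga*inverse 1)*(B*1 + C*inverse 1) - inverse r0*(1*q + inverse (1*q))*(be*1 + de*inverse 1))) / ((q - inverse q) * (q^2 - inverse q^2))
       = be + de"
proof -
  have main: "r0*(B*1 + C*inverse 1)*q * (al + ga)
       - r0 * ((al*1 + ga*inverse 1)*(B*1 + C*inverse 1) - inverse r0*(1*q + inverse (1*q))*(be*1 + de*inverse 1)) * q
       = (q^2+1) * (be + de)"
    using q r0 B al be unfolding C ga de
    by (simp add: field_simps) algebra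
  show ?thesis unfolding Ksimp[OF q qq q1] dsimp[OF q qq q1] comb3[OF qq] main using qq by simp
qed

lemma scal2:
  fixes q t1 p r0 a1 a2 a3 b e f w1 w2 :: complex
  assumes q: "q \<noteq> 0" and t1: "t1 \<noteq> 0" and p: "p \<noteq> 0" and r0: "r0 \<noteq> 0" and t1d: "t1 = q - inverse q"
    and h: "inverse q * (q*a1 - inverse q*a2) - q*(q*a2 - inverse q*a3) = (-((t1*p)^2/r0^2))*b + w1*e + (p/r0*w2)*f"
  shows "b = (r0/(t1*p))*(q*((r0/(t1*p))*(q*a2 - inverse q*a3) + (r0*w1/(t1*(t1*p)))*e) - inverse q*((r0/(t1*p))*(q*a1 - inverse q*a2) + (r0*w1/(t1*(t1*p)))*e)) + (r0*w2/(t1*(t1*p)))*f"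
proof -
  have K: "(t1*p)^2/r0^2 \<noteq> 0" using t1 p r0 by simp
  have bsol: "b = (w1*e + (p/r0*w2)*f - (inverse q * (q*a1 - inverse q*a2) - q*(q*a2 - inverse q*a3))) / ((t1*p)^2/r0^2)"
    using h K by (simp add: field_simps)
  have qq: "q - inverse q = t1" using t1d by simp
  have "(r0/(t1*p))*(q*((r0/(t1*p))*(q*a2 - inverse q*a3) + (r0*w1/(t1*(t1*p)))*e) - inverse q*((r0/(t1*p))*(q*a1 - inverse q*a2) + (r0*w1/(t1*(t1*p)))*e))
     = (r0/(t1*p))^2 * (q*(q*a2 - inverse q*a3) - inverse q*(q*a1 - inverse q*a2)) + (r0/(t1*p))*(r0*w1/(t1*(t1*p)))*e*(q - inverse q)"
    by (simp add: algebra_simps power2_eq_square diff_divide_distrib)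
  also have "\<dots> = (r0/(t1*p))^2 * (q*(q*a2 - inverse q*a3) - inverse q*(q*a1 - inverse q*a2)) + (r0/(t1*p))*(r0*w1/(t1*(t1*p)))*e*t1"
    unfolding qq ..
  finally have R: "(r0/(t1*p))*(q*((r0/(t1*p))*(q*a2 - inverse q*a3) + (r0*w1/(t1*(t1*p)))*e) - inverse q*((r0/(t1*p))*(q*a1 - inverse q*a2) + (r0*w1/(t1*(t1*p)))*e))
     = (r0/(t1*p))^2 * (q*(q*a2 - inverse q*a3) - inverse q*(q*a1 - inverse q*a2)) + (r0/(t1*p))*(r0*w1/(t1*(t1*p)))*e*t1" .
  show ?thesis unfolding R using q t1 p r0 unfolding bsol by (simp add: field_simps) algebra
qed


lemma basics:
  fixes q r0 :: complex and bb cc :: "label \<Rightarrow> complex"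
  assumes q: "q \<noteq> 0" and q2: "q^2 \<noteq> 1" and q4: "q^4 \<noteq> 1" and r0: "r0 \<noteq> 0"
    and bb_nz: "\<forall>x. bb x \<noteq> 0" and r0_rel: "\<forall>x. r0 powi (-2) = bb x * cc x"
  shows "q^2 - inverse q^2 \<noteq> 0" "q^2 + 1 \<noteq> 0" "q - inverse q \<noteq> 0" "\<And>x. cc x = inverse (r0^2 * bb x)"
proof -
  show "q^2 - inverse q^2 \<noteq> 0"
  proof
    assume "q^2 - inverse q^2 = 0"
    hence "q^2 * q^2 = 1" using q by (simp add: field_simps)
    thus False using q4 by (simp add: power4_eq_xxxx power2_eq_square mult.assoc)
  qed
  show "q^2 + 1 \<noteq> 0"
  proof
    assume "q^2 + 1 = 0"
    hence "q^2 = -1" by (simp add: eq_neg_iff_add_eq_0)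
    hence "(q^2)^2 = 1" by simp
    hence "q^4 = 1" by (simp flip: power_mult)
    thus False using q4 by simp
  qed
  show "q - inverse q \<noteq> 0"
  proof
    assume "q - inverse q = 0"
    hence "q * q = 1" using q by (simp add: field_simps)
    thus False using q2 by (simp add: power2_eq_square)
  qed
  fix x
  have "r0 powi (-2) = inverse (r0^2)" by (simp add: power_int_minus)
  thus "cc x = inverse (r0^2 * bb x)" using r0_rel bb_nz r0 by (metis divide_inverse_commute inverse_mult_distrib mult.commute nonzero_eq_divide_eq)
qed

lemma cE_L: "0 \<le> M \<Longrightarrow> M < int n \<Longrightarrow> cE q n r0 Ba Ca Bb Cb Bc Cc (M+1) M = cL q n r0 Ba Ca Bb Cb Bc Cc (M+1)"
  by (simp add: cE_def)
lemma cE_U: "0 \<le> M \<Longrightarrow> M < int n \<Longrightarrow> cE q n r0 Ba Ca Bb Cb Bc Cc M (M+1) = cU q n r0 Ba Ca Bb Cb Bc Cc (M+1)"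
  by (simp add: cE_def)
lemma cE_out: "i \<notin> {0..int n} \<or> j \<notin> {0..int n} \<or> \<bar>i - j\<bar> > 1 \<Longrightarrow> cE q n r0 Ba Ca Bb Cb Bc Cc i j = 0"
  by (auto simp: cE_def)
lemma cE_D: "0 \<le> M \<Longrightarrow> M \<le> int n \<Longrightarrow> cE q n r0 Ba Ca Bb Cb Bc Cc M M =
   Bb + Cb - (if M + 1 \<le> int n then cU q n r0 Ba Ca Bb Cb Bc Cc (M + 1) else 0)
        - (if M - 1 \<ge> 0 then cL q n r0 Ba Ca Bb Cb Bc Cc M else 0)"
  by (simp add: cE_def)

lemma wU:
  fixes q r0 :: complex and n :: nat and M :: int and bb cc :: "label \<Rightarrow> complex" and a b c :: label
  assumes q: "q \<noteq> 0" and q2: "q^2 \<noteq> 1" and q4: "q^4 \<noteq> 1" and r0: "r0 \<noteq> 0"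
    and bb_nz: "\<forall>x. bb x \<noteq> 0" and r0_rel: "\<forall>x. r0 powi (-2) = bb x * cc x"
    and M: "0 \<le> M" "M \<le> int n" and nd: "M < int n \<Longrightarrow> coef_xy q n r0 bb cc a b c M (M+1) \<noteq> 0"
  shows "r0 / (q^2 - inverse q^2) * (q * theta q bb cc b (M+1) - inverse q * theta q bb cc b M) * coef_xy q n r0 bb cc a b c (M+1) M
    = coef_yx q n r0 bb cc b c a (M+1) M * gfun q r0 bb cc a b c M"
proof (cases "M = int n")
  case True
  thus ?thesis by (simp add: coef_xy_def coef_yx_def cE_def)
next
  case False
  hence Mn: "M < int n" using M by simp
  note bs = basics[OF q q2 q4 r0 bb_nz r0_rel]
  have B: "bb b \<noteq> 0" and al: "bb a \<noteq> 0" and be: "bb c \<noteq> 0" using bb_nz by auto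
  define x where "x = q powi (2*M)"
  define s where "s = q ^ n"
  have x0: "x \<noteq> 0" and s0: "s \<noteq> 0" using q unfolding x_def s_def by auto
  note E = pweqs[OF q x_def s_def]
  have hU: "cU q n r0 (bb b) (cc b) (bb a) (cc a) (q powi (- 2 * int n) * cc c) (q powi (2 * int n) * bb c) (M+1) \<noteq> 0"
    using nd[OF Mn] cE_U[OF M(1) Mn] by (simp add: coef_xy_def)
  have fac: "cc b + bb a * (inverse (s^2) * cc c) * r0 * (x * s^2 * q) \<noteq> 0"
    using hU unfolding cU_def E x_def[symmetric] by auto
  have rel: "(cc b + bb a * (inverse (s^2) * cc c) * r0 * (x * s^2 * q)) * (r0^3 * bb b * cc a * bb c)
      = q * (bb b * x + r0 * inverse q * cc a * bb c)"
    using q x0 s0 r0 B al be unfolding bs(4) by (simp add: field_simps power2_eq_square power3_eq_cube)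
  have gd: "bb b * x + r0 * inverse q * cc a * bb c \<noteq> 0"
  proof
    assume "bb b * x + r0 * inverse q * cc a * bb c = 0"
    hence "(cc b + bb a * (inverse (s^2) * cc c) * r0 * (x * s^2 * q)) * (r0^3 * bb b * cc a * bb c) = 0" using rel by simp
    moreover have "r0^3 * bb b * cc a * bb c \<noteq> 0" using r0 B be bs(4) al by simp
    ultimately show False using fac by simp
  qed
  show ?thesis
    unfolding coef_xy_def coef_yx_def cE_L[OF M(1) Mn] theta_def gfun_def cL_def
    apply (rule gen3)
    unfolding E x_def[symmetric]
    by (rule coreU[OF q bs(1) x0 _ r0 B al be bs(4) bs(4) bs(4) gd]) (use s0 in simp)
qed


lemma sum_smult_comp: "(\<Sum>N\<in>S. f N *s (v N :: complex^'n)) $ i = (\<Sum>N\<in>S. f N * v N $ i)"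
  by simp

lemma basis_indep: "is_basis n v \<Longrightarrow> (\<Sum>M\<in>{0..int n}. c M *s v M) = 0 \<Longrightarrow> M \<in> {0..int n} \<Longrightarrow> c M = 0"
  unfolding is_basis_def by blast

lemma basis_span: "is_basis n v \<Longrightarrow> \<exists>c. w = (\<Sum>M\<in>{0..int n}. c M *s v M)"
  unfolding is_basis_def by blast

lemma sum_single: "M \<in> {0..int n} \<Longrightarrow> (\<Sum>N\<in>{0..int n}. (if N = M then a else 0) *s (v N :: complex^'n)) = a *s v M"
proof -
  assume M: "M \<in> {0..int n}"
  have "(\<Sum>N\<in>{0..int n}. (if N = M then a else 0) *s v N) = (\<Sum>N\<in>{0..int n}. (if N = M then a *s v N else 0))"
    by (rule sum.cong) (auto simp: vec_eq_iff)
  also have "\<dots> = a *s v M" using M by (simp add: sum.delta)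
  finally show ?thesis .
qed

lemma basis_nz: "is_basis n v \<Longrightarrow> M \<in> {0..int n} \<Longrightarrow> v M \<noteq> 0"
proof
  assume b: "is_basis n v" and M: "M \<in> {0..int n}" and z: "v M = 0"
  have "(\<Sum>N\<in>{0..int n}. (if N = M then 1 else 0) *s v N) = 0" using sum_single[OF M, of 1 v] z
    by (simp add: vec_eq_iff)
  from basis_indep[OF b this M] show False by simp
qed

lemma sum_sub_smult: "(\<Sum>N\<in>S. f N *s (v N :: complex^'n)) - (\<Sum>N\<in>S. g N *s v N) = (\<Sum>N\<in>S. (f N - g N) *s v N)"
  by (simp add: vec_eq_iff sum_subtractf algebra_simps)

lemma basis_coeff_eq: "is_basis n v \<Longrightarrow> (\<Sum>N\<in>{0..int n}. f N *s v N) = (\<Sum>N\<in>{0..int n}. g N *s v N) \<Longrightarrow> M \<in> {0..int n} \<Longrightarrow> f M = g M"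
proof -
  assume b: "is_basis n v" and e: "(\<Sum>N\<in>{0..int n}. f N *s v N) = (\<Sum>N\<in>{0..int n}. g N *s v N)" and M: "M \<in> {0..int n}"
  have "(\<Sum>N\<in>{0..int n}. (f N - g N) *s v N) = 0" using e sum_sub_smult[of f v "{0..int n}" g] by simp
  from basis_indep[OF b this M] show ?thesis by simp
qed

fun pm :: "complex^'n^'n \<Rightarrow> complex list \<Rightarrow> complex^'n^'n" where
  "pm B [] = mat 1"
| "pm B (c # cs) = (B - mat c) ** pm B cs"

lemma pm_mv: "pm B (c # cs) *v v = B *v (pm B cs *v v) - c *s (pm B cs *v v)"
  by (simp add: matrix_vector_mul_assoc[symmetric] mdiff_mv mat_mv)

lemma pm_eig: "B *v w = ph *s w \<Longrightarrow> pm B cs *v w = (\<Prod>c\<leftarrow>cs. ph - c) *s w"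
proof (induction cs)
  case Nil thus ?case by (simp add: vec_eq_iff)
next
  case (Cons c cs)
  have "pm B (c # cs) *v w = B *v ((\<Prod>c\<leftarrow>cs. ph - c) *s w) - c *s ((\<Prod>c\<leftarrow>cs. ph - c) *s w)"
    unfolding pm_mv Cons.IH[OF Cons.prems] ..
  thus ?case using Cons.prems by (simp add: mv_smult vec_eq_iff algebra_simps)
qed

lemma pm_linear: "pm B cs *v (\<Sum>N\<in>S. f N *s (w N)) = (\<Sum>N\<in>S. f N *s (pm B cs *v w N))"
  by (simp add: mv_sum mv_smult)

lemma krylov:
  fixes B :: "complex^'n^'n" and u :: "int \<Rightarrow> complex^'n" and x :: "int \<Rightarrow> int \<Rightarrow> complex"
  assumes act: "\<forall>M\<in>{0..int n}. B *v u M = (\<Sum>N\<in>{0..int n}. x N M *s u N)"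
    and band: "\<forall>M\<in>{0..int n}. \<forall>N\<in>{0..int n}. \<bar>N - M\<bar> > 1 \<longrightarrow> x N M = 0"
    and sub: "\<forall>M\<in>{0..int n}. \<forall>N\<in>{0..int n}. \<bar>N - M\<bar> = 1 \<longrightarrow> x N M \<noteq> 0"
  shows "length cs \<le> n \<Longrightarrow> \<exists>a. pm B cs *v u 0 = (\<Sum>N\<in>{0..int n}. a N *s u N) \<and>
           (\<forall>N\<in>{0..int n}. N > int (length cs) \<longrightarrow> a N = 0) \<and> a (int (length cs)) \<noteq> 0"
proof (induction cs)
  case Nil
  have "pm B [] *v u 0 = (\<Sum>N\<in>{0..int n}. (if N = 0 then 1 else 0) *s u N)"
    using sum_single[of 0 n 1 u] by (simp add: vec_eq_iff)
  thus ?case by (intro exI[of _ "\<lambda>N. if N = 0 then 1 else 0"]) auto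
next
  case (Cons c cs)
  let ?k = "int (length cs)"
  from Cons.prems have kn: "?k + 1 \<le> int n" by simp
  obtain a where a: "pm B cs *v u 0 = (\<Sum>N\<in>{0..int n}. a N *s u N)"
    and az: "\<forall>N\<in>{0..int n}. N > ?k \<longrightarrow> a N = 0" and ak: "a ?k \<noteq> 0"
    using Cons by auto
  define a' where "a' N' = (\<Sum>N\<in>{0..int n}. a N * x N' N) - c * a N'" for N'
  have "pm B (c # cs) *v u 0 = (\<Sum>N'\<in>{0..int n}. a' N' *s u N')"
  proof -
    have "B *v (pm B cs *v u 0) = (\<Sum>N\<in>{0..int n}. a N *s (\<Sum>N'\<in>{0..int n}. x N' N *s u N'))"
      unfolding a mv_sum mv_smult using act by simp
    also have "\<dots> = (\<Sum>N'\<in>{0..int n}. (\<Sum>N\<in>{0..int n}. a N * x N' N) *s u N')"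
      by (simp only: vec_eq_iff sum_component vector_smult_component sum_distrib_left sum_distrib_right mult.assoc) (rule allI, rule sum.swap)
    finally have 1: "B *v (pm B cs *v u 0) = (\<Sum>N'\<in>{0..int n}. (\<Sum>N\<in>{0..int n}. a N * x N' N) *s u N')" .
    have 2: "c *s (pm B cs *v u 0) = (\<Sum>N'\<in>{0..int n}. (c * a N') *s u N')"
      unfolding a by (simp add: vec_eq_iff sum_distrib_left mult.assoc)
    show ?thesis unfolding pm_mv 1 2 sum_sub_smult a'_def ..
  qed
  moreover have "\<forall>N'\<in>{0..int n}. N' > int (length (c#cs)) \<longrightarrow> a' N' = 0"
  proof (intro ballI impI)
    fix N' assume N': "N' \<in> {0..int n}" "N' > int (length (c#cs))"
    have "a N * x N' N = 0" if "N \<in> {0..int n}" for N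
    proof (cases "N > ?k")
      case True thus ?thesis using az that by simp
    next
      case False thus ?thesis using band that N' by auto
    qed
    hence "(\<Sum>N\<in>{0..int n}. a N * x N' N) = 0" by (intro sum.neutral) auto
    moreover have "a N' = 0" using az N' by simp
    ultimately show "a' N' = 0" unfolding a'_def by simp
  qed
  moreover have "a' (int (length (c#cs))) \<noteq> 0"
  proof -
    have k1: "?k + 1 \<in> {0..int n}" "?k \<in> {0..int n}" using kn by auto
    have "(\<Sum>N\<in>{0..int n}. a N * x (?k+1) N) = (\<Sum>N\<in>{0..int n}. if N = ?k then a ?k * x (?k+1) ?k else 0)"
    proof (rule sum.cong)
      fix N assume N: "N \<in> {0..int n}"
      show "a N * x (?k+1) N = (if N = ?k then a ?k * x (?k+1) ?k else 0)"
      proof (cases "N = ?k")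
        case False
        show ?thesis
        proof (cases "N > ?k")
          case True thus ?thesis using az N False by simp
        next
          case nk: False
          hence "\<bar>?k + 1 - N\<bar> > 1" using False by auto
          thus ?thesis using band N k1 False by simp
        qed
      qed simp
    qed simp
    also have "\<dots> = a ?k * x (?k+1) ?k" using k1 by (simp add: sum.delta)
    finally have s: "(\<Sum>N\<in>{0..int n}. a N * x (?k+1) N) = a ?k * x (?k+1) ?k" .
    have "a (?k+1) = 0" using az k1 by simp
    moreover have "x (?k+1) ?k \<noteq> 0" using sub k1 by simp
    ultimately have "a' (?k+1) \<noteq> 0" unfolding a'_def using s ak by simp
    moreover have "int (length (c#cs)) = ?k + 1" by simp
    ultimately show ?thesis by (simp add: add.commute)
  qed
  ultimately show ?case by blast
qed

lemma leonard_distinct: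
  fixes A B :: "complex^'n^'n"
  assumes u: "is_basis n u" and irr: "irr_tridiag_in n B u"
    and w: "is_basis n w" and eig: "\<forall>M\<in>{0..int n}. B *v w M = ph M *s w M"
  shows "inj_on ph {0..int n}"
proof (rule inj_onI, rule ccontr)
  fix i j assume i: "i \<in> {0..int n}" and j: "j \<in> {0..int n}" and e: "ph i = ph j" and ne: "i \<noteq> j"
  obtain x where act: "\<forall>M\<in>{0..int n}. B *v u M = (\<Sum>N\<in>{0..int n}. x N M *s u N)"
    and band: "\<forall>M\<in>{0..int n}. \<forall>N\<in>{0..int n}. \<bar>N - M\<bar> > 1 \<longrightarrow> x N M = 0"
    and sub: "\<forall>M\<in>{0..int n}. \<forall>N\<in>{0..int n}. \<bar>N - M\<bar> = 1 \<longrightarrow> x N M \<noteq> 0"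
    using irr unfolding irr_tridiag_in_def by blast
  define cs where "cs = map ph (filter (\<lambda>K. K \<noteq> j) [0..int n])"
  have dl: "distinct [0..int n]" by simp
  have "length (filter (\<lambda>K. K \<noteq> j) [0..int n]) = n"
  proof -
    have "length (filter (\<lambda>K. K \<noteq> j) [0..int n]) = card (set (filter (\<lambda>K. K \<noteq> j) [0..int n]))"
      by (rule distinct_card[symmetric]) simp
    also have "set (filter (\<lambda>K. K \<noteq> j) [0..int n]) = {0..int n} - {j}" by auto
    also have "card \<dots> = n" using j by simp
    finally show ?thesis .
  qed
  hence len: "length cs = n" unfolding cs_def by simp
  have zero: "pm B cs *v w K = 0" if K: "K \<in> {0..int n}" for K
  proof -
    have "ph K \<in> set cs"
    proof (cases "K = j")
      case True
      hence "ph K = ph i" using e by simp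
      moreover have "i \<in> set (filter (\<lambda>K. K \<noteq> j) [0..int n])" using i ne by simp
      ultimately show ?thesis unfolding cs_def by auto
    next
      case False
      hence "K \<in> set (filter (\<lambda>K. K \<noteq> j) [0..int n])" using K by simp
      thus ?thesis unfolding cs_def by auto
    qed
    hence "(\<Prod>c\<leftarrow>cs. ph K - c) = 0" by (induction cs) auto
    thus ?thesis using pm_eig[of B "w K" "ph K" cs] eig K by simp
  qed
  obtain cw where cw: "u 0 = (\<Sum>M\<in>{0..int n}. cw M *s w M)" using basis_span[OF w] by blast
  have "pm B cs *v u 0 = 0" unfolding cw pm_linear using zero by simp
  moreover obtain a where a: "pm B cs *v u 0 = (\<Sum>N\<in>{0..int n}. a N *s u N)" and an: "a (int (length cs)) \<noteq> 0"
    using krylov[OF act band sub, of cs] len by auto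
  ultimately have "(\<Sum>N\<in>{0..int n}. a N *s u N) = 0" by simp
  from basis_indep[OF u this, of "int n"] an len show False by simp
qed

lemma tri_sum:
  fixes f :: "int \<Rightarrow> complex" and v :: "int \<Rightarrow> complex^'n"
  assumes M: "M \<in> {0..int n}" and out: "\<forall>N. N \<notin> {0..int n} \<longrightarrow> f N = 0"
    and band: "\<forall>N. N \<notin> {M-1, M, M+1} \<longrightarrow> f N = 0"
  shows "(\<Sum>N\<in>{0..int n}. f N *s v N) = f (M+1) *s v (M+1) + f M *s v M + f (M-1) *s v (M-1)"
proof -
  have z: "f N *s v N = 0" if "N \<notin> {M-1, M, M+1}" for N using band that by simp
  have "(\<Sum>N\<in>{0..int n}. f N *s v N) = (\<Sum>N\<in>{0..int n} \<union> {M-1, M, M+1}. f N *s v N)"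
    by (rule sum.mono_neutral_left) (auto simp: out[rule_format])
  also have "\<dots> = (\<Sum>N\<in>{M-1, M, M+1}. f N *s v N)"
    apply (rule sum.mono_neutral_right)
      apply simp
     apply blast
    apply (intro ballI)
    apply (rule z)
    apply blast
    done
  also have "\<dots> = f (M+1) *s v (M+1) + f M *s v M + f (M-1) *s v (M-1)"
    by (simp add: algebra_simps)
  finally show ?thesis .
qed

lemma eig_multiple:
  fixes A :: "complex^'n^'n"
  assumes vb: "is_basis n vb" and eig: "\<forall>K\<in>{0..int n}. A *v vb K = ph K *s vb K"
    and inj: "inj_on ph {0..int n}" and M: "M \<in> {0..int n}" and ew: "A *v w = ph M *s w"
  shows "\<exists>l. w = l *s vb M"
proof -
  obtain c where c: "w = (\<Sum>K\<in>{0..int n}. c K *s vb K)" using basis_span[OF vb] by blast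
  have "A *v w = (\<Sum>K\<in>{0..int n}. (c K * ph K) *s vb K)"
    unfolding c mv_sum mv_smult using eig by (intro sum.cong) (auto simp: vec_eq_iff)
  moreover have "ph M *s w = (\<Sum>K\<in>{0..int n}. (ph M * c K) *s vb K)"
    unfolding c by (simp add: vec_eq_iff sum_distrib_left mult.assoc)
  ultimately have e: "(\<Sum>K\<in>{0..int n}. (c K * ph K) *s vb K) = (\<Sum>K\<in>{0..int n}. (ph M * c K) *s vb K)"
    using ew by simp
  have cz: "c K = 0" if K: "K \<in> {0..int n}" "K \<noteq> M" for K
  proof -
    have "c K * ph K = ph M * c K" using basis_coeff_eq[OF vb e K(1)] .
    moreover have "ph K \<noteq> ph M" using inj K M by (meson inj_on_eq_iff)
    ultimately show ?thesis by (metis mult.commute mult_cancel_left)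
  qed
  have "w = (\<Sum>K\<in>{0..int n}. (if K = M then c M else 0) *s vb K)"
    unfolding c using cz by (intro sum.cong) auto
  also have "\<dots> = c M *s vb M" using sum_single[OF M] .
  finally show ?thesis by blast
qed

lemma irr_transfer:
  fixes A B :: "complex^'n^'n"
  assumes vb: "is_basis n vb" and eig: "\<forall>K\<in>{0..int n}. B *v vb K = ph K *s vb K"
    and inj: "inj_on ph {0..int n}"
    and w: "eigenbasis_ord n B ph w" and irr: "irr_tridiag_in n A w"
    and actA: "\<forall>M\<in>{0..int n}. A *v vb M = (\<Sum>N\<in>{0..int n}. X N M *s vb N)"
    and M: "M \<in> {0..int n}" and N: "N \<in> {0..int n}" and d: "\<bar>N - M\<bar> = 1"
  shows "X N M \<noteq> 0"
proof -
  have wb: "is_basis n w" and weig: "\<forall>M\<in>{0..int n}. B *v w M = ph M *s w M"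
    using w unfolding eigenbasis_ord_def by auto
  obtain x where act: "\<forall>M\<in>{0..int n}. A *v w M = (\<Sum>N\<in>{0..int n}. x N M *s w N)"
    and sub: "\<forall>M\<in>{0..int n}. \<forall>N\<in>{0..int n}. \<bar>N - M\<bar> = 1 \<longrightarrow> x N M \<noteq> 0"
    using irr unfolding irr_tridiag_in_def by blast
  have "\<forall>K\<in>{0..int n}. \<exists>l. w K = l *s vb K"
    using eig_multiple[OF vb eig inj] weig by blast
  then obtain l where l: "\<forall>K\<in>{0..int n}. w K = l K *s vb K" by metis
  have lnz: "l K \<noteq> 0" if "K \<in> {0..int n}" for K
    using basis_nz[OF wb that] l that by auto
  have wM: "w M = l M *s vb M" using l M by simp
  have "A *v w M = l M *s (\<Sum>K\<in>{0..int n}. X K M *s vb K)" using wM actA M by (simp add: mv_smult)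
  also have "\<dots> = (\<Sum>K\<in>{0..int n}. (l M * X K M) *s vb K)"
    by (simp add: vec_eq_iff sum_distrib_left mult.assoc)
  finally have 1: "A *v w M = (\<Sum>K\<in>{0..int n}. (l M * X K M) *s vb K)" .
  have "A *v w M = (\<Sum>K\<in>{0..int n}. x K M *s w K)" using act M by simp
  also have "\<dots> = (\<Sum>K\<in>{0..int n}. (x K M * l K) *s vb K)"
    by (rule sum.cong) (auto simp: l[rule_format] vec_eq_iff mult.assoc)
  finally have 2: "A *v w M = (\<Sum>K\<in>{0..int n}. (x K M * l K) *s vb K)" .
  have "(\<Sum>K\<in>{0..int n}. (l M * X K M) *s vb K) = (\<Sum>K\<in>{0..int n}. (x K M * l K) *s vb K)" using 1 2 by simp
  from basis_coeff_eq[OF vb this N] have "l M * X N M = x N M * l N" .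
  moreover have "x N M * l N \<noteq> 0" using sub M N d lnz[OF N] by simp
  ultimately show ?thesis by auto
qed


lemma omega_sym: "omega q n r0 bb cc x y z = omega q n r0 bb cc y x z"
  unfolding omega_def by (simp add: mult.commute)

lemma scal3:
  fixes q t1 p r0 a1 a2 a3 b e f w1 w2 :: complex
  assumes q: "q \<noteq> 0" and t1: "t1 \<noteq> 0" and p: "p \<noteq> 0" and r0: "r0 \<noteq> 0" and t1d: "t1 = q - inverse q"
    and h: "inverse q * (q*a1 - inverse q*a2) - q*(q*a2 - inverse q*a3) = (-((t1*p)^2/r0^2))*b + w1*e + (p/r0*w2)*f"
  shows "b = (r0/(t1*p))*(q*((r0/(t1*p))*(q*a2 - inverse q*a1) + (r0*w1/(t1*(t1*p)))*e) - inverse q*((r0/(t1*p))*(q*a3 - inverse q*a2) + (r0*w1/(t1*(t1*p)))*e)) + (r0*w2/(t1*(t1*p)))*f"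
proof -
  have h': "inverse q * (q*a3 - inverse q*a2) - q*(q*a2 - inverse q*a1) = (-((t1*p)^2/r0^2))*b + w1*e + (p/r0*w2)*f"
    using h by (simp add: algebra_simps)
  show ?thesis by (rule scal2[OF q t1 p r0 t1d h'])
qed

lemma AW_vec:
  fixes X Y :: "complex^'n^'n"
  assumes "qbr (inverse q) X (qbr q X Y) = smat k1 Y + smat k2 X + smat k3 (mat 1)"
  shows "inverse q *s (X *v (q *s (X *v (Y *v v)) - inverse q *s (Y *v (X *v v)))) - q *s (q *s (X *v (Y *v (X *v v))) - inverse q *s (Y *v (X *v (X *v v))))
     = k1 *s (Y *v v) + k2 *s (X *v v) + k3 *s v"
proof -
  have "qbr (inverse q) X (qbr q X Y) *v v = (smat k1 Y + smat k2 X + smat k3 (mat 1)) *v v" using assms by simp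
  thus ?thesis by (simp only: qbr_mv madd_mv smat_mv matrix_vector_mul_lid inverse_inverse_eq)
qed

lemma op_formula:
  fixes q r0 :: complex and n :: nat and bb cc :: "label \<Rightarrow> complex" and A :: "label \<Rightarrow> complex^'n^'n" and a b c :: label
  assumes q: "q \<noteq> 0" and q2: "q^2 - inverse q^2 \<noteq> 0" and q1: "q - inverse q \<noteq> 0" and qq: "q^2 + 1 \<noteq> 0" and r0: "r0 \<noteq> 0"
    and A_dia: "A Dia = smat (r0 / (q^2 - inverse q^2)) (qbr q (A Star) (A Dot))
        + smat (r0 * omega q n r0 bb cc Dot Star Dia / ((q - inverse q) * (q^2 - inverse q^2))) (mat 1)"
    and AW: "\<forall>x y z. distinct [x, y, z] \<longrightarrow>
        qbr (inverse q) (A x) (qbr q (A x) (A y))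
          = smat (- ((q^2 - inverse q^2)^2 / r0^2)) (A y)
            + smat (omega q n r0 bb cc x y z) (A x)
            + smat ((q + inverse q) / r0 * omega q n r0 bb cc x z y) (mat 1)"
    and cyc: "cyclic a b c"
  shows "A c *v v = (r0 / (q^2 - inverse q^2)) *s (q *s (A b *v (A a *v v)) - inverse q *s (A a *v (A b *v v)))
      + (r0 * omega q n r0 bb cc a b c / ((q - inverse q) * (q^2 - inverse q^2))) *s v"
proof -
  define kk where "kk = r0 / (q^2 - inverse q^2)"
  define d where "d = r0 * omega q n r0 bb cc Dot Star Dia / ((q - inverse q) * (q^2 - inverse q^2))"
  have Rv: "A Dia *v w = kk *s (q *s (A Star *v (A Dot *v w)) - inverse q *s (A Dot *v (A Star *v w))) + d *s w" for w
    unfolding A_dia kk_def d_def by (simp only: madd_mv smat_mv qbr_mv matrix_vector_mul_lid)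
  have t2: "q^2 - inverse q^2 = (q - inverse q) * (q + inverse q)" by (simp add: algebra_simps power2_eq_square)
  have p0: "q + inverse q \<noteq> 0" using q2 unfolding t2 by simp
  have cases: "(a,b,c) = (Dot,Star,Dia) \<or> (a,b,c) = (Star,Dia,Dot) \<or> (a,b,c) = (Dia,Dot,Star)"
    using cyc unfolding cyclic_def by auto
  show ?thesis
  proof -
    { assume abc: "(a,b,c) = (Dot,Star,Dia)"
      hence ?thesis using Rv[of v] unfolding kk_def d_def by auto }
    moreover
    { assume abc: "(a,b,c) = (Star,Dia,Dot)"
      let ?P = "A Star" and ?Q = "A Dot" and ?R = "A Dia"
      have AW1: "inverse q *s (?P *v (q *s (?P *v (?Q *v v)) - inverse q *s (?Q *v (?P *v v)))) - q *s (q *s (?P *v (?Q *v (?P *v v))) - inverse q *s (?Q *v (?P *v (?P *v v))))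
          = (- ((q^2 - inverse q^2)^2 / r0^2)) *s (?Q *v v) + omega q n r0 bb cc Star Dot Dia *s (?P *v v) + ((q + inverse q) / r0 * omega q n r0 bb cc Star Dia Dot) *s v"
        by (rule AW_vec) (use AW in \<open>auto\<close>)
      have e1: "?R *v (?P *v v) = kk *s (q *s (?P *v (?Q *v (?P *v v))) - inverse q *s (?Q *v (?P *v (?P *v v)))) + d *s (?P *v v)"
        by (rule Rv)
      have e2: "?P *v (?R *v v) = kk *s (inverse q *s (?P *v (?P *v (?Q *v v))) * 0 + q *s (?P *v (?P *v (?Q *v v))) - inverse q *s (?P *v (?Q *v (?P *v v)))) + d *s (?P *v v)"
        by (simp add: Rv mv_add mv_diff mv_smult)
      have AW': "inverse q *s (q *s (?P *v (?P *v (?Q *v v))) - inverse q *s (?P *v (?Q *v (?P *v v)))) - q *s (q *s (?P *v (?Q *v (?P *v v))) - inverse q *s (?Q *v (?P *v (?P *v v))))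
          = (- ((q^2 - inverse q^2)^2 / r0^2)) *s (?Q *v v) + omega q n r0 bb cc Star Dot Dia *s (?P *v v) + ((q + inverse q) / r0 * omega q n r0 bb cc Star Dia Dot) *s v"
        using AW1 by (simp add: mv_diff mv_smult)
      have "?Q *v v = kk *s (q *s (?R *v (?P *v v)) - inverse q *s (?P *v (?R *v v))) + (r0 * omega q n r0 bb cc Star Dia Dot / ((q - inverse q) * (q^2 - inverse q^2))) *s v"
        unfolding e1 e2
      proof (simp only: vec_eq_iff, intro allI)
        fix i
        have h: "inverse q * (q * (?P *v (?P *v (?Q *v v)))$i - inverse q * (?P *v (?Q *v (?P *v v)))$i) - q * (q * (?P *v (?Q *v (?P *v v)))$i - inverse q * (?Q *v (?P *v (?P *v v)))$i)
            = (- (((q - inverse q) * (q + inverse q))^2 / r0^2)) * (?Q *v v)$i + omega q n r0 bb cc Dot Star Dia * (?P *v v)$i + ((q + inverse q) / r0 * omega q n r0 bb cc Star Dia Dot) * v$i"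
          using arg_cong[OF AW', of "\<lambda>x. x $ i"] unfolding t2 omega_sym[of q n r0 bb cc Star Dot Dia]
          by (simp only: vector_smult_component vector_minus_component vector_add_component)
        show "(?Q *v v) $ i = (kk *s (q *s (kk *s (q *s (?P *v (?Q *v (?P *v v))) - inverse q *s (?Q *v (?P *v (?P *v v)))) + d *s (?P *v v)) -
                inverse q *s (kk *s (inverse q *s (?P *v (?P *v (?Q *v v))) * 0 + q *s (?P *v (?P *v (?Q *v v))) - inverse q *s (?P *v (?Q *v (?P *v v)))) + d *s (?P *v v))) +
            (r0 * omega q n r0 bb cc Star Dia Dot / ((q - inverse q) * (q^2 - inverse q^2))) *s v) $ i"
          unfolding kk_def d_def t2
          by (simp only: vector_smult_component vector_minus_component vector_add_component vector_mult_component mult_zero_right add_0_left)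
             (rule scal2[OF q q1 p0 r0 refl h])
      qed
      hence ?thesis using abc unfolding kk_def by auto }
    moreover
    { assume abc: "(a,b,c) = (Dia,Dot,Star)"
      let ?P = "A Star" and ?Q = "A Dot" and ?R = "A Dia"
      have AW1: "inverse q *s (?Q *v (q *s (?Q *v (?P *v v)) - inverse q *s (?P *v (?Q *v v)))) - q *s (q *s (?Q *v (?P *v (?Q *v v))) - inverse q *s (?P *v (?Q *v (?Q *v v))))
          = (- ((q^2 - inverse q^2)^2 / r0^2)) *s (?P *v v) + omega q n r0 bb cc Dot Star Dia *s (?Q *v v) + ((q + inverse q) / r0 * omega q n r0 bb cc Dot Dia Star) *s v"
        by (rule AW_vec) (use AW in \<open>auto\<close>)
      have e1: "?Q *v (?R *v v) = kk *s (q *s (?Q *v (?P *v (?Q *v v))) - inverse q *s (?Q *v (?Q *v (?P *v v)))) + d *s (?Q *v v)"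
        by (simp add: Rv mv_add mv_diff mv_smult)
      have e2: "?R *v (?Q *v v) = kk *s (q *s (?P *v (?Q *v (?Q *v v))) - inverse q *s (?Q *v (?P *v (?Q *v v)))) + d *s (?Q *v v)"
        by (rule Rv)
      have AW': "inverse q *s (q *s (?Q *v (?Q *v (?P *v v))) - inverse q *s (?Q *v (?P *v (?Q *v v)))) - q *s (q *s (?Q *v (?P *v (?Q *v v))) - inverse q *s (?P *v (?Q *v (?Q *v v))))
          = (- ((q^2 - inverse q^2)^2 / r0^2)) *s (?P *v v) + omega q n r0 bb cc Dot Star Dia *s (?Q *v v) + ((q + inverse q) / r0 * omega q n r0 bb cc Dot Dia Star) *s v"
        using AW1 by (simp add: mv_diff mv_smult)
      have "?P *v v = kk *s (q *s (?Q *v (?R *v v)) - inverse q *s (?R *v (?Q *v v))) + (r0 * omega q n r0 bb cc Dot Dia Star / ((q - inverse q) * (q^2 - inverse q^2))) *s v"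
        unfolding e1 e2
      proof (simp only: vec_eq_iff, intro allI)
        fix i
        have h: "inverse q * (q * (?Q *v (?Q *v (?P *v v)))$i - inverse q * (?Q *v (?P *v (?Q *v v)))$i) - q * (q * (?Q *v (?P *v (?Q *v v)))$i - inverse q * (?P *v (?Q *v (?Q *v v)))$i)
            = (- (((q - inverse q) * (q + inverse q))^2 / r0^2)) * (?P *v v)$i + omega q n r0 bb cc Dot Star Dia * (?Q *v v)$i + ((q + inverse q) / r0 * omega q n r0 bb cc Dot Dia Star) * v$i"
          using arg_cong[OF AW', of "\<lambda>x. x $ i"] unfolding t2
          by (simp only: vector_smult_component vector_minus_component vector_add_component)
        show "(?P *v v) $ i = (kk *s (q *s (kk *s (q *s (?Q *v (?P *v (?Q *v v))) - inverse q *s (?Q *v (?Q *v (?P *v v)))) + d *s (?Q *v v)) -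
                inverse q *s (kk *s (q *s (?P *v (?Q *v (?Q *v v))) - inverse q *s (?Q *v (?P *v (?Q *v v)))) + d *s (?Q *v v))) +
            (r0 * omega q n r0 bb cc Dot Dia Star / ((q - inverse q) * (q^2 - inverse q^2))) *s v) $ i"
          unfolding kk_def d_def t2
          by (simp only: vector_smult_component vector_minus_component vector_add_component)
             (rule scal3[OF q q1 p0 r0 refl h])
      qed
      moreover have "omega q n r0 bb cc Dot Dia Star = omega q n r0 bb cc Dia Dot Star" by (rule omega_sym)
      ultimately have ?thesis using abc unfolding kk_def by auto }
    ultimately show ?thesis using cases by blast
  qed
qed



lemma cE_U2: "0 < M \<Longrightarrow> M \<le> int n \<Longrightarrow> cE q n r0 Ba Ca Bb Cb Bc Cc (M-1) M = cU q n r0 Ba Ca Bb Cb Bc Cc M"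
  by (simp add: cE_def)
lemma cE_L2: "0 < M \<Longrightarrow> M \<le> int n \<Longrightarrow> cE q n r0 Ba Ca Bb Cb Bc Cc M (M-1) = cL q n r0 Ba Ca Bb Cb Bc Cc M"
  by (simp add: cE_def)

lemma wD:
  fixes q r0 :: complex and n :: nat and M :: int and bb cc :: "label \<Rightarrow> complex" and a b c :: label
  assumes q: "q \<noteq> 0" and q2: "q^2 \<noteq> 1" and q4: "q^4 \<noteq> 1" and r0: "r0 \<noteq> 0"
    and bb_nz: "\<forall>x. bb x \<noteq> 0" and r0_rel: "\<forall>x. r0 powi (-2) = bb x * cc x"
    and M: "0 \<le> M" "M \<le> int n" and nd: "0 < M \<Longrightarrow> coef_xy q n r0 bb cc a b c (M-1) M \<noteq> 0"
    and nd2: "0 < M \<Longrightarrow> coef_xy q n r0 bb cc a b c M (M-1) \<noteq> 0"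
  shows "r0 / (q^2 - inverse q^2) * (q * theta q bb cc b (M-1) - inverse q * theta q bb cc b M) * coef_xy q n r0 bb cc a b c (M-1) M
    = coef_yx q n r0 bb cc b c a (M-1) M / gfun q r0 bb cc a b c (M-1)"
proof (cases "M = 0")
  case True
  thus ?thesis by (simp add: coef_xy_def coef_yx_def cE_def)
next
  case False
  hence M0: "0 < M" using M by simp
  note bs = basics[OF q q2 q4 r0 bb_nz r0_rel]
  have B: "bb b \<noteq> 0" and al: "bb a \<noteq> 0" and be: "bb c \<noteq> 0" using bb_nz by auto
  define x where "x = q powi (2*M)"
  define s where "s = q ^ n"
  have x0: "x \<noteq> 0" and s0: "s \<noteq> 0" using q unfolding x_def s_def by auto
  note E = pweqs[OF q x_def s_def]
  have hU: "cU q n r0 (bb b) (cc b) (bb a) (cc a) (q powi (- 2 * int n) * cc c) (q powi (2 * int n) * bb c) M \<noteq> 0"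
    using nd[OF M0] cE_U2[OF M0 M(2)] by (simp add: coef_xy_def)
  have hL: "cL q n r0 (bb b) (cc b) (bb a) (cc a) (q powi (- 2 * int n) * cc c) (q powi (2 * int n) * bb c) M \<noteq> 0"
    using nd2[OF M0] cE_L2[OF M0 M(2)] by (simp add: coef_xy_def)
  have fac: "cc b + bb a * (inverse (s^2) * cc c) * r0 * (x * s^2 / q) \<noteq> 0"
    using hU unfolding cU_def E x_def[symmetric] by auto
  have fac2: "bb a * (inverse (s^2) * cc c) * r0 * (s^2 / q) + bb b * (x / q^2) \<noteq> 0"
    using hL unfolding cL_def E x_def[symmetric] by auto
  have rel: "(cc b + bb a * (inverse (s^2) * cc c) * r0 * (x * s^2 / q)) * (r0^3 * bb b * cc a * bb c * q)
      = (bb b * (x/q^2) + r0 * inverse q * cc a * bb c) * q^2"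
    using q x0 s0 r0 B al be unfolding bs(4) by (simp add: field_simps power2_eq_square power3_eq_cube)
  have rel2: "(bb a * (inverse (s^2) * cc c) * r0 * (s^2 / q) + bb b * (x / q^2)) * (r0^3 * cc a * bb c * q^3)
      = (cc b * (q^2/x) + r0*q*cc a*bb c) * (r0^2 * bb b * x)"
    using q x0 s0 r0 B al be unfolding bs(4) by (simp add: field_simps power2_eq_square power3_eq_cube)
  have nz1: "r0^3 * bb b * cc a * bb c * q \<noteq> 0" using r0 B be bs(4) al q by simp
  have nz2: "r0^3 * cc a * bb c * q^3 \<noteq> 0" using r0 be bs(4) al q by simp
  have gd: "bb b * (x/q^2) + r0 * inverse q * cc a * bb c \<noteq> 0"
  proof
    assume "bb b * (x/q^2) + r0 * inverse q * cc a * bb c = 0"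
    hence "(cc b + bb a * (inverse (s^2) * cc c) * r0 * (x * s^2 / q)) * (r0^3 * bb b * cc a * bb c * q) = 0" using rel by simp
    thus False using fac nz1 by simp
  qed
  have gn: "cc b * (q^2/x) + r0*q*cc a*bb c \<noteq> 0"
  proof
    assume "cc b * (q^2/x) + r0*q*cc a*bb c = 0"
    hence "(bb a * (inverse (s^2) * cc c) * r0 * (s^2 / q) + bb b * (x / q^2)) * (r0^3 * cc a * bb c * q^3) = 0" using rel2 by simp
    thus False using fac2 nz2 by simp
  qed
  show ?thesis
    unfolding coef_xy_def coef_yx_def cE_U2[OF M0 M(2)] theta_def gfun_def cU_def
    apply (rule gen2d)
    unfolding E x_def[symmetric]
    by (rule coreD[OF q bs(1) x0 s0 r0 B al be bs(4) bs(4) bs(4) gn gd])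
qed

lemma partgenU: "(D2::complex) \<noteq> 0 \<Longrightarrow> K*(f3*f4) - f3'*f4' = D2*G/Q \<Longrightarrow> K*(a*b*f3*f4/(D1*D2)) - a*b*f3'*f4'/(D1*D2) = a*b*G/(Q*D1)"
proof -
  assume D2: "D2 \<noteq> 0" and h: "K*(f3*f4) - f3'*f4' = D2*G/Q"
  have "K*(a*b*f3*f4/(D1*D2)) - a*b*f3'*f4'/(D1*D2) = (K*(a*b*f3*f4) - a*b*f3'*f4')/(D1*D2)" by (simp add: diff_divide_distrib)
  also have "\<dots> = a*b*(K*(f3*f4) - f3'*f4')/(D1*D2)" by (simp add: algebra_simps)
  also have "\<dots> = a*b*(D2*G/Q)/(D1*D2)" by (simp only: h)
  also have "\<dots> = a*b*G/(Q*D1)" using D2 by (simp add: field_simps)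
  finally show ?thesis .
qed

lemma partgenL: "(D1::complex) \<noteq> 0 \<Longrightarrow> K*(g3*g4) - g3'*g4' = D1*G/Q \<Longrightarrow> K*(p*a*b*g3*g4/(D1*D2)) - p*a*b*g3'*g4'/(D1*D2) = p*a*b*G/(Q*D2)"
proof -
  assume D1: "D1 \<noteq> 0" and h: "K*(g3*g4) - g3'*g4' = D1*G/Q"
  have "K*(p*a*b*g3*g4/(D1*D2)) - p*a*b*g3'*g4'/(D1*D2) = (K*(p*a*b*g3*g4) - p*a*b*g3'*g4')/(D1*D2)" by (simp add: diff_divide_distrib)
  also have "\<dots> = p*a*b*(K*(g3*g4) - g3'*g4')/(D1*D2)" by (simp add: algebra_simps)
  also have "\<dots> = p*a*b*(D1*G/Q)/(D1*D2)" by (simp only: h)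
  also have "\<dots> = p*a*b*G/(Q*D2)" using D1 by (simp add: field_simps)
  finally show ?thesis .
qed

lemma diagcomb: "K*uX - uY = PU \<Longrightarrow> K*lX - lY = PL \<Longrightarrow> K*al + dd - be = PU + PL \<Longrightarrow> K*(al - uX - lX) + dd = be - uY - (lY::complex)"
  by (simp add: algebra_simps)

lemma mainsplit: "(D::complex) \<noteq> 0 \<Longrightarrow> Q \<noteq> 0 \<Longrightarrow> m*D = (X + Y)/Q \<Longrightarrow> m = X/(Q*D) + Y/(Q*D)"
  by (simp add: field_simps)

lemma wDiag:
  fixes q r0 :: complex and n :: nat and M :: int and bb cc :: "label \<Rightarrow> complex" and a b c :: label
  assumes q: "q \<noteq> 0" and q2: "q^2 \<noteq> 1" and q4: "q^4 \<noteq> 1" and r0: "r0 \<noteq> 0"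
    and bb_nz: "\<forall>x. bb x \<noteq> 0" and r0_rel: "\<forall>x. r0 powi (-2) = bb x * cc x"
    and M: "0 \<le> M" "M \<le> int n" and ndU: "M < int n \<Longrightarrow> coef_xy q n r0 bb cc a b c M (M+1) \<noteq> 0"
    and ndL: "0 < M \<Longrightarrow> coef_xy q n r0 bb cc a b c M (M-1) \<noteq> 0"
  shows "r0 / (q^2 - inverse q^2) * (q * theta q bb cc b M - inverse q * theta q bb cc b M) * coef_xy q n r0 bb cc a b c M M
      + r0 * omega q n r0 bb cc a b c / ((q - inverse q) * (q^2 - inverse q^2))
    = coef_yx q n r0 bb cc b c a M M"
proof -
  note bs = basics[OF q q2 q4 r0 bb_nz r0_rel]
  have B: "bb b \<noteq> 0" and al: "bb a \<noteq> 0" and be: "bb c \<noteq> 0" using bb_nz by auto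
  define x where "x = q powi (2*M)"
  define s where "s = q ^ n"
  have x0: "x \<noteq> 0" and s0: "s \<noteq> 0" using q unfolding x_def s_def by auto
  note E = pweqs[OF q x_def s_def]
  have qQ: "q^2 + 1 \<noteq> 0" by (rule bs(2))
  let ?K = "r0 / (q^2 - inverse q^2) * (q * (bb b * x + cc b * inverse x) - inverse q * (bb b * x + cc b * inverse x))"
  let ?GU = "- 1/(r0^2*bb c) + q/(x*r0^3*bb b*bb a) - q*x* s^2*r0*bb b*bb a + q^2* s^2*bb c"
  let ?GL = "1/(q^2*r0^2*bb c) + s^2*bb a/(q*x*r0*bb b) - x*bb b/(q*r0*bb a) - s^2*bb c"
  let ?D = "cc b - bb b * x^2"
  have cm: "(?K * (bb a + cc a)
       + r0 * (- ((q - inverse q)^2) * ((bb a * s + cc a * inverse s)*(bb b * s + cc b * inverse s) - inverse r0*(s*q + inverse (s*q))*(bb c * s + cc c * inverse s))) / ((q - inverse q) * (q^2 - inverse q^2))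
       - (bb c + cc c)) * ?D
    = ((1 - x/s^2)*(cc b - bb b*x)*?GU + q^2/s^2*(1-x)*(cc b - bb b*(x* s^2))*?GL) / (q^2+1)"
    by (rule coreMain[OF q bs(2) bs(3) x0 s0 r0 B al be bs(4) bs(4) bs(4)])
  have PU: "?K * ((1 - x/s^2) * (cc b - bb b * x) * (cc b + bb a * (inverse (s^2) * cc c) * r0 * (x * s^2 * q)) * (cc a + bb b * (s^2 * bb c) * r0 * (x * q)) / ((cc b - bb b * x^2) * (cc b - bb b * (x^2 * q^2))))
      - (1 - x/s^2) * (cc b - bb b * x) * (cc b + bb c * bb a * r0 * (x * s^2 * q)) * (cc c + bb b * cc a * r0 * (x * q)) / ((cc b - bb b * x^2) * (cc b - bb b * (x^2 * q^2)))
      = (1 - x/s^2) * (cc b - bb b * x) * ?GU / ((q^2+1) * ?D)"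
    if D2: "cc b - bb b * (x^2 * q^2) \<noteq> 0"
    by (rule partgenU[OF D2 coreGU[OF q bs(2) bs(3) x0 s0 r0 B al be bs(4) bs(4) bs(4)]])
  have PL: "?K * (q^2/s^2 * (1 - x) * (cc b - bb b * (x * s^2)) * (bb a * (inverse (s^2) * cc c) * r0 * (s^2/q) + bb b * (x/q^2)) * (cc b * (s^2 * bb c) * r0 * inverse q + cc a * (x/q^2)) / ((cc b - bb b * (x^2/q^2)) * (cc b - bb b * x^2)))
      - q^2/s^2 * (1 - x) * (cc b - bb b * (x * s^2)) * (bb c * bb a * r0 * (s^2/q) + bb b * (x/q^2)) * (cc b * cc a * r0 * inverse q + cc c * (x/q^2)) / ((cc b - bb b * (x^2/q^2)) * (cc b - bb b * x^2))
      = q^2/s^2 * (1 - x) * (cc b - bb b * (x * s^2)) * ?GL / ((q^2+1) * ?D)"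
    if D1: "cc b - bb b * (x^2/q^2) \<noteq> 0"
    by (rule partgenL[OF D1 coreGL[OF q bs(2) bs(3) x0 s0 r0 B al be bs(4) bs(4) bs(4)]])
  show ?thesis
  proof (cases "n = 0")
    case True
    hence M0: "M = 0" using M by simp
    have x1: "x = 1" unfolding x_def M0 by simp
    have s1: "s = 1" unfolding s_def True by simp
    show ?thesis
      unfolding coef_xy_def coef_yx_def cE_D[OF M] theta_def omega_def thetaS_def
      unfolding E x_def[symmetric] x1 s1 using M0 True
      using coreMain0[OF q bs(2) bs(3) r0 B al be bs(4) bs(4) bs(4)] by simp
  next
    case n0: False
    have DL: "?D \<noteq> 0 \<and> cc b - bb b * (x^2/q^2) \<noteq> 0" if M0: "0 < M"
    proof -
      have hL: "cL q n r0 (bb b) (cc b) (bb a) (cc a) (q powi (- 2 * int n) * cc c) (q powi (2 * int n) * bb c) M \<noteq> 0"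
        using ndL[OF M0] cE_L2[OF M0 M(2)] by (simp add: coef_xy_def)
      thus ?thesis unfolding cL_def E x_def[symmetric] by auto
    qed
    have DU: "?D \<noteq> 0 \<and> cc b - bb b * (x^2 * q^2) \<noteq> 0" if MU: "M < int n"
    proof -
      have hU: "cU q n r0 (bb b) (cc b) (bb a) (cc a) (q powi (- 2 * int n) * cc c) (q powi (2 * int n) * bb c) (M+1) \<noteq> 0"
        using ndU[OF MU] cE_U[OF M(1) MU] by (simp add: coef_xy_def)
      thus ?thesis unfolding cU_def E x_def[symmetric] by auto
    qed
    have D0: "?D \<noteq> 0" using DU DL n0 M by (cases "M = 0") auto
    have msplit: "?K * (bb a + cc a)
       + r0 * (- ((q - inverse q)^2) * ((bb a * s + cc a * inverse s)*(bb b * s + cc b * inverse s) - inverse r0*(s*q + inverse (s*q))*(bb c * s + cc c * inverse s))) / ((q - inverse q) * (q^2 - inverse q^2))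
       - (bb c + cc c) = (1 - x/s^2)*(cc b - bb b*x)*?GU / ((q^2+1) * ?D) + q^2/s^2*(1-x)*(cc b - bb b*(x* s^2))*?GL / ((q^2+1) * ?D)"
      by (rule mainsplit[OF D0 qQ cm])
    show ?thesis
    proof (cases "M = 0")
      case M0: True
      have MU: "M < int n" using M0 n0 by simp
      have x1: "x = 1" unfolding x_def M0 by simp
      have c1: "(M + 1 \<le> int n) = True" using MU by simp
      have c2: "(0 \<le> M - 1) = False" using M0 by simp
      have z: "q^2/s^2*(1-x)*(cc b - bb b*(x* s^2))*?GL / ((q^2+1) * ?D) = 0" using x1 by simp
      show ?thesis
        unfolding coef_xy_def coef_yx_def cE_D[OF M] theta_def omega_def thetaS_def cU_def cL_def E x_def[symmetric] c1 c2 if_True if_False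
        apply (rule diagcomb[where lX=0 and lY=0 and PL=0])
          apply (rule PU) using DU[OF MU] apply simp
         apply simp
        using msplit unfolding z by simp
    next
      case Mp: False
      hence M0: "0 < M" using M by simp
      show ?thesis
      proof (cases "M = int n")
        case Mn: True
        have "q powi (2 * int n) = q powi (int (2*n))" by simp
        also have "\<dots> = q ^ (2*n)" by (rule power_int_of_nat)
        also have "\<dots> = (q^n)^2" by (simp add: power_mult[symmetric] mult.commute)
        finally have xs: "x = s^2" unfolding x_def s_def Mn .
        have c1: "(M + 1 \<le> int n) = False" using Mn by simp
        have c2: "(0 \<le> M - 1) = True" using M0 by simp
        have z: "(1 - x/s^2)*(cc b - bb b*x)*?GU / ((q^2+1) * ?D) = 0" using xs s0 by simp
        show ?thesis
          unfolding coef_xy_def coef_yx_def cE_D[OF M] theta_def omega_def thetaS_def cU_def cL_def E x_def[symmetric] c1 c2 if_True if_False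
          apply (rule diagcomb[where uX=0 and uY=0 and PU=0])
            apply simp
           apply (rule PL) using DL[OF M0] apply simp
          using msplit unfolding z by simp
      next
        case Mn: False
        hence MU: "M < int n" using M by simp
        have c1: "(M + 1 \<le> int n) = True" using MU by simp
        have c2: "(0 \<le> M - 1) = True" using M0 by simp
        show ?thesis
          unfolding coef_xy_def coef_yx_def cE_D[OF M] theta_def omega_def thetaS_def cU_def cL_def E x_def[symmetric] c1 c2 if_True if_False
          apply (rule diagcomb)
            apply (rule PU) using DU[OF MU] apply simp
           apply (rule PL) using DL[OF M0] apply simp
          by (rule msplit)
      qed
    qed
  qed
qed


lemma comb_sum:
  fixes vb :: "int \<Rightarrow> complex^'n"
  shows "kk *s (q *s (\<Sum>N\<in>S. a N *s vb N) - iq *s (\<Sum>N\<in>S. b N *s vb N)) + (\<Sum>N\<in>S. d N *s vb N)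
     = (\<Sum>N\<in>S. (kk * (q * a N - iq * b N) + d N) *s vb N)"
  by (simp add: vec_eq_iff sum_distrib_left sum.distrib sum_subtractf algebra_simps)

theorem lemma3p4:
  fixes q r0 :: complex and n :: nat
    and bb cc :: "label \<Rightarrow> complex"
    and A :: "label \<Rightarrow> complex^'n^'n"
    and a b c :: label
    and va vb :: "int \<Rightarrow> complex^'n"
  assumes dim: "CARD('n) = n + 1"
    and q_nz: "q \<noteq> 0" and q_nonroot: "\<forall>k::nat. k > 0 \<longrightarrow> q ^ k \<noteq> 1"
    and r0_nz: "r0 \<noteq> 0" and bb_nz: "\<forall>x. bb x \<noteq> 0" and cc_nz: "\<forall>x. cc x \<noteq> 0"
    and r0_rel: "\<forall>x. r0 powi (-2) = bb x * cc x"
    and A_dia: "A Dia = smat (r0 / (q^2 - inverse q^2)) (qbr q (A Star) (A Dot))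
        + smat (r0 * omega q n r0 bb cc Dot Star Dia / ((q - inverse q) * (q^2 - inverse q^2))) (mat 1)"
    and AW: "\<forall>x y z. distinct [x, y, z] \<longrightarrow>
        qbr (inverse q) (A x) (qbr q (A x) (A y))
          = smat (- ((q^2 - inverse q^2)^2 / r0^2)) (A y)
            + smat (omega q n r0 bb cc x y z) (A x)
            + smat ((q + inverse q) / r0 * omega q n r0 bb cc x z y) (mat 1)"
    and cyc: "cyclic a b c"
    and LP_ab: "leonard_pair_ord n (A a) (A b) (theta q bb cc a) (theta q bb cc b)"
    and LP_bc: "leonard_pair_ord n (A b) (A c) (theta q bb cc b) (theta q bb cc c)"
    and att: "attached_bases q n r0 bb cc A a b c va vb"
  shows "\<forall>M\<in>{0..int n}.
     A c *v vb M =
        (coef_yx q n r0 bb cc b c a (M+1) M * gfun q r0 bb cc a b c M) *s vb (M+1)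
      + coef_yx q n r0 bb cc b c a M M *s vb M
      + (coef_yx q n r0 bb cc b c a (M-1) M / gfun q r0 bb cc a b c (M-1)) *s vb (M-1)"
proof
  fix M assume M: "M \<in> {0..int n}"
  have q2: "q^2 \<noteq> 1" using q_nonroot by auto
  have q4: "q^4 \<noteq> 1" using q_nonroot by auto
  note bs = basics[OF q_nz q2 q4 r0_nz bb_nz r0_rel]
  define X where "X = coef_xy q n r0 bb cc a b c"
  define Y where "Y = coef_yx q n r0 bb cc b c a"
  define th where "th = theta q bb cc b"
  define kk where "kk = r0 / (q^2 - inverse q^2)"
  define dcc where "dcc = r0 * omega q n r0 bb cc a b c / ((q - inverse q) * (q^2 - inverse q^2))"
  define g where "g = gfun q r0 bb cc a b c"
  have op: "A c *v v = kk *s (q *s (A b *v (A a *v v)) - inverse q *s (A a *v (A b *v v))) + dcc *s v" for v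
    unfolding kk_def dcc_def by (rule op_formula[OF q_nz bs(1) bs(3) bs(2) r0_nz A_dia AW cyc])
  have vb: "is_basis n vb" and eigb: "\<forall>K\<in>{0..int n}. A b *v vb K = th K *s vb K"
    and tri: "\<forall>K\<in>{0..int n}. A a *v vb K = X (K+1) K *s vb (K+1) + X K K *s vb K + X (K-1) K *s vb (K-1)"
    using att unfolding attached_bases_def X_def th_def by auto
  have Xout: "X N K = 0" if "N \<notin> {0..int n} \<or> K \<notin> {0..int n} \<or> \<bar>N - K\<bar> > 1" for N K
    unfolding X_def coef_xy_def using cE_out that by blast
  have Yout: "Y N K = 0" if "N \<notin> {0..int n} \<or> K \<notin> {0..int n} \<or> \<bar>N - K\<bar> > 1" for N K
    unfolding Y_def coef_yx_def using cE_out that by blast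
  have actA: "\<forall>K\<in>{0..int n}. A a *v vb K = (\<Sum>N\<in>{0..int n}. X N K *s vb N)"
  proof
    fix K assume K: "K \<in> {0..int n}"
    have "(\<Sum>N\<in>{0..int n}. X N K *s vb N) = X (K+1) K *s vb (K+1) + X K K *s vb K + X (K-1) K *s vb (K-1)"
      by (rule tri_sum[OF K]) (auto intro!: Xout)
    thus "A a *v vb K = (\<Sum>N\<in>{0..int n}. X N K *s vb N)" using tri K by simp
  qed
  obtain u where u: "eigenbasis_ord n (A a) (theta q bb cc a) u" and irru: "irr_tridiag_in n (A b) u"
    and wex: "\<exists>w. eigenbasis_ord n (A b) (theta q bb cc b) w \<and> irr_tridiag_in n (A a) w"
    using LP_ab unfolding leonard_pair_ord_def by blast
  obtain w where w: "eigenbasis_ord n (A b) th w" and irrw: "irr_tridiag_in n (A a) w"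
    using wex unfolding th_def by blast
  have inj: "inj_on th {0..int n}"
    by (rule leonard_distinct[OF _ irru vb eigb]) (use u in \<open>simp add: eigenbasis_ord_def\<close>)
  have Xnz: "X N K \<noteq> 0" if "N \<in> {0..int n}" "K \<in> {0..int n}" "\<bar>N - K\<bar> = 1" for N K
    by (rule irr_transfer[OF vb eigb inj w irrw actA that(2) that(1) that(3)])
  have M0: "0 \<le> M" "M \<le> int n" using M by auto
  define W where "W N = kk * (q * th N - inverse q * th M) * X N M + (if N = M then dcc else 0)" for N
  define Z where "Z N = (if N = M + 1 then Y (M+1) M * g M else if N = M then Y M M
                          else if N = M - 1 then Y (M-1) M / g (M-1) else 0)" for N
  have lhs: "A c *v vb M = (\<Sum>N\<in>{0..int n}. W N *s vb N)"
  proof -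
    have e1: "A b *v (A a *v vb M) = (\<Sum>N\<in>{0..int n}. (th N * X N M) *s vb N)"
      unfolding actA[rule_format, OF M] mv_sum mv_smult
      by (rule sum.cong) (auto simp: eigb[rule_format] vec_eq_iff mult.commute mult.left_commute)
    have e2: "A a *v (A b *v vb M) = (\<Sum>N\<in>{0..int n}. (th M * X N M) *s vb N)"
      unfolding eigb[rule_format, OF M] mv_smult actA[rule_format, OF M]
      by (simp add: vec_eq_iff sum_distrib_left mult.assoc)
    have e3: "dcc *s vb M = (\<Sum>N\<in>{0..int n}. (if N = M then dcc else 0) *s vb N)"
      by (rule sum_single[OF M, symmetric])
    show ?thesis unfolding op e1 e2 e3 comb_sum W_def
      by (rule sum.cong) (auto simp: algebra_simps)
  qed
  have rhs: "(Y (M+1) M * g M) *s vb (M+1) + Y M M *s vb M + (Y (M-1) M / g (M-1)) *s vb (M-1)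
      = (\<Sum>N\<in>{0..int n}. Z N *s vb N)"
  proof -
    have "(\<Sum>N\<in>{0..int n}. Z N *s vb N) = Z (M+1) *s vb (M+1) + Z M *s vb M + Z (M-1) *s vb (M-1)"
    proof (rule tri_sum[OF M])
      show "\<forall>N. N \<notin> {0..int n} \<longrightarrow> Z N = 0" using M by (auto simp: Z_def Yout)
      show "\<forall>N. N \<notin> {M - 1, M, M + 1} \<longrightarrow> Z N = 0" by (auto simp: Z_def)
    qed
    thus ?thesis by (simp add: Z_def)
  qed
  have WZ: "W N = Z N" if N: "N \<in> {0..int n}" for N
  proof -
    consider "N = M + 1" | "N = M" | "N = M - 1" | "\<bar>N - M\<bar> > 1" by linarith
    thus ?thesis
    proof cases
      case 1
      have "kk * (q * th (M+1) - inverse q * th M) * X (M+1) M = Y (M+1) M * g M"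
        unfolding kk_def th_def X_def Y_def g_def
        by (rule wU[OF q_nz q2 q4 r0_nz bb_nz r0_rel M0]) (use Xnz[of M "M+1"] M in \<open>simp add: X_def\<close>)
      thus ?thesis unfolding W_def Z_def using 1 by simp
    next
      case 2
      have "kk * (q * th M - inverse q * th M) * X M M + dcc = Y M M"
        unfolding kk_def th_def X_def Y_def dcc_def
        by (rule wDiag[OF q_nz q2 q4 r0_nz bb_nz r0_rel M0])
           (use Xnz[of M "M+1"] Xnz[of M "M-1"] M in \<open>simp_all add: X_def\<close>)
      thus ?thesis unfolding W_def Z_def using 2 by simp
    next
      case 3
      have "kk * (q * th (M-1) - inverse q * th M) * X (M-1) M = Y (M-1) M / g (M-1)"
        unfolding kk_def th_def X_def Y_def g_def
        by (rule wD[OF q_nz q2 q4 r0_nz bb_nz r0_rel M0])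
           (use Xnz[of "M-1" M] Xnz[of M "M-1"] M in \<open>simp_all add: X_def\<close>)
      thus ?thesis unfolding W_def Z_def using 3 by simp
    next
      case 4
      hence "X N M = 0" by (intro Xout) simp
      thus ?thesis unfolding W_def Z_def using 4 by auto
    qed
  qed
  have "A c *v vb M = (\<Sum>N\<in>{0..int n}. Z N *s vb N)"
    unfolding lhs by (rule sum.cong) (simp_all add: WZ)
  thus "A c *v vb M =
        (coef_yx q n r0 bb cc b c a (M+1) M * gfun q r0 bb cc a b c M) *s vb (M+1)
      + coef_yx q n r0 bb cc b c a M M *s vb M
      + (coef_yx q n r0 bb cc b c a (M-1) M / gfun q r0 bb cc a b c (M-1)) *s vb (M-1)"
    using rhs unfolding Y_def g_def by simp
qed


end
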